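(* Consider the patient model in the context with actions chosen by any non-anticipating (possibly randomized) policy. Let $\lambda_2>0$ and $\delta\in(0,1)$. Then with probability at least $1-\delta$, for all $t\geq1$ and all $i=1,\dots,M$ simultaneously, $|\hat\mu_{i,t}-\mu^*_i|\leq\alpha^\mu_{i,t}(\delta)$, where $$\alpha^\mu_{i,t}(\delta):=\frac{e^{3\bar\mu}}{\sqrt{H_t(\hat\mu_{i,t})}}\Big[\frac{\sqrt{\lambda_2}}{2}+\frac{2}{\sqrt{\lambda_2}}\Big(\bar\mu+\log\Big(\frac{2M\sqrt{H_t(\hat\mu_{i,t})}}{\delta\sqrt{\lambda_2}}\Big)\Big)\Big]+\frac{e^{2\bar\mu}\lambda_2\bar\mu}{H_t(\hat\mu_{i,t})},$$ $$H_t(\hat\mu_{i,t}):=\lambda_2+\sum_{s=1}^{t-1}\mathbf 1_{\{u_s=e_i\}}\sigma'(x_s+\hat\mu_{i,t}).$$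
   Context: Patient model: $M\geq1$ treatments; $\mathcal U:=\{v\in\{0,1\}^M:\|v\|_0\leq1\}$, $e_i$ the $i$-th basis vector. State: $x_{t+1}=ax_t+b^\top u_t+c^\top d_t+w_t$, adherence $d^i_t\mid x_t,u^i_t\sim\mathrm{Bernoulli}(u^i_t\sigma(x_t+\mu_i))$, $\sigma$ the sigmoid, $x_1$ distributed as the noise. Parameters: $a\in[0,\bar a]$, known $\bar a\in(0,1)$, $\|b\|_\infty\leq\bar b$, $\|c\|_\infty\leq\bar c$, true shifts $\mu^*\in[-\bar\mu,\bar\mu]^M$ with known $\bar\mu>0$. $x_t,u_t,d_t$ fully observed; $u_t$ depends only on the observed history up to $x_t$ and independent randomization. Noise i.i.d., zero-symmetric, $\sigma_s^2$-subgaussian, bounded by $\bar w>0$, log-concave density, known variance. Estimator: $\hat\mu_{i,t}$ is the projection onto $[-\bar\mu,\bar\mu]$ of $\hat\mu^{MLE}_{i,t}:=\arg\max_{\mu_i\in\mathbb R}\sum_{s=1}^{t-1}\mathbf 1_{\{u_s=e_i\}}[d^i_s\log\sigma(x_s+\mu_i)+(1-d^i_s)\log(1-\sigma(x_s+\mu_i))]-\frac{\lambda_2}{2}\mu_i^2$. *)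

theory Defs
  imports "HOL-Probability.Probability"
begin

text \<open>Treatments are indexed by 1..M. Action / adherence vectors are functions nat => real,
  zero outside {1..M}.\<close>

definition sigmoid :: "real \<Rightarrow> real" where
  "sigmoid z = 1 / (1 + exp (- z))"

definition sigmoid' :: "real \<Rightarrow> real" where
  "sigmoid' z = sigmoid z * (1 - sigmoid z)"

definition basis_vec :: "nat \<Rightarrow> (nat \<Rightarrow> real)" where
  "basis_vec i = (\<lambda>j. if j = i then 1 else 0)"

definition action_set :: "nat \<Rightarrow> (nat \<Rightarrow> real) set" where
  "action_set M = {v. (\<forall>j. v j \<in> {0, 1}) \<and> (\<forall>j. j \<notin> {1..M} \<longrightarrow> v j = 0)
                      \<and> card {j. v j \<noteq> 0} \<le> 1}"

definition pen_loglik ::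
  "real \<Rightarrow> (nat \<Rightarrow> real) \<Rightarrow> (nat \<Rightarrow> nat \<Rightarrow> real) \<Rightarrow> (nat \<Rightarrow> nat \<Rightarrow> real)
     \<Rightarrow> nat \<Rightarrow> nat \<Rightarrow> real \<Rightarrow> real" where
  "pen_loglik lam2 xs us ds i t m =
     (\<Sum>s\<in>{1..<t}. (if us s = basis_vec i then 1 else 0) *
        (ds s i * ln (sigmoid (xs s + m)) + (1 - ds s i) * ln (1 - sigmoid (xs s + m))))
     - lam2 / 2 * m\<^sup>2"

definition mu_mle ::
  "real \<Rightarrow> (nat \<Rightarrow> real) \<Rightarrow> (nat \<Rightarrow> nat \<Rightarrow> real) \<Rightarrow> (nat \<Rightarrow> nat \<Rightarrow> real)
     \<Rightarrow> nat \<Rightarrow> nat \<Rightarrow> real" where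
  "mu_mle lam2 xs us ds i t =
     (SOME m. \<forall>m'. pen_loglik lam2 xs us ds i t m' \<le> pen_loglik lam2 xs us ds i t m)"

definition mu_hat ::
  "real \<Rightarrow> real \<Rightarrow> (nat \<Rightarrow> real) \<Rightarrow> (nat \<Rightarrow> nat \<Rightarrow> real) \<Rightarrow> (nat \<Rightarrow> nat \<Rightarrow> real)
     \<Rightarrow> nat \<Rightarrow> nat \<Rightarrow> real" where
  "mu_hat mubar lam2 xs us ds i t = max (- mubar) (min mubar (mu_mle lam2 xs us ds i t))"

definition H_info ::
  "real \<Rightarrow> (nat \<Rightarrow> real) \<Rightarrow> (nat \<Rightarrow> nat \<Rightarrow> real) \<Rightarrow> nat \<Rightarrow> nat \<Rightarrow> real \<Rightarrow> real" where
  "H_info lam2 xs us i t m =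
     lam2 + (\<Sum>s\<in>{1..<t}. (if us s = basis_vec i then 1 else 0) * sigmoid' (xs s + m))"

definition alpha_mu ::
  "nat \<Rightarrow> real \<Rightarrow> real \<Rightarrow> real \<Rightarrow> (nat \<Rightarrow> real) \<Rightarrow> (nat \<Rightarrow> nat \<Rightarrow> real)
     \<Rightarrow> (nat \<Rightarrow> nat \<Rightarrow> real) \<Rightarrow> nat \<Rightarrow> nat \<Rightarrow> real" where
  "alpha_mu M mubar lam2 \<delta> xs us ds i t =
     (let H = H_info lam2 xs us i t (mu_hat mubar lam2 xs us ds i t) in
       exp (3 * mubar) / sqrt H *
         (sqrt lam2 / 2 + 2 / sqrt lam2 *
            (mubar + ln (2 * real M * sqrt H / (\<delta> * sqrt lam2))))
       + exp (2 * mubar) * lam2 * mubar / H)"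

definition log_concave :: "(real \<Rightarrow> real) \<Rightarrow> bool" where
  "log_concave f = (\<forall>x y \<theta>. 0 < \<theta> \<and> \<theta> < 1 \<longrightarrow>
      f x powr \<theta> * f y powr (1 - \<theta>) \<le> f (\<theta> * x + (1 - \<theta>) * y))"

end

theory Submission
  imports Defs
begin

lemma exp_quad_bound:
  fixes y :: real assumes "\<bar>y\<bar> \<le> 1"
  shows "exp y \<le> 1 + y + y\<^sup>2"
proof -
  obtain t where t: "\<bar>t\<bar> \<le> \<bar>y\<bar>" and e: "exp y = (\<Sum>m<3. y ^ m / fact m) + exp t / fact 3 * y ^ 3"
    using Maclaurin_exp_le[of y 3] by blast
  have s: "(\<Sum>m<3. y ^ m / fact m) = 1 + y + y\<^sup>2 / 2"
    by (simp add: eval_nat_numeral fact_numeral power2_eq_square)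
  have et: "exp t \<le> 3"
  proof -
    have "exp t \<le> exp 1" using t assms by simp
    also have "\<dots> \<le> 3" using exp_le by simp
    finally show ?thesis .
  qed
  have "exp t / fact 3 * y ^ 3 \<le> y\<^sup>2 / 2"
  proof -
    have "exp t / fact 3 * y ^ 3 \<le> exp t / 6 * \<bar>y\<bar> ^ 3"
    proof -
      have "y ^ 3 \<le> \<bar>y\<bar> ^ 3" by (metis abs_ge_self power_abs power_mono abs_ge_zero order_trans le_less)
      then show ?thesis by (simp add: fact_numeral)
    qed
    also have "\<dots> \<le> 3 / 6 * \<bar>y\<bar>^3" by (intro mult_right_mono) (use et in auto)
    also have "\<bar>y\<bar>^3 \<le> \<bar>y\<bar>^2"
      using assms by (intro power_decreasing) auto
    then have "3 / 6 * \<bar>y\<bar>^3 \<le> y\<^sup>2 / 2" by simp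
    finally show ?thesis .
  qed
  then show ?thesis using e s by (simp add: power2_eq_square) 
qed

lemma bern_mgf:
  fixes p \<theta> :: real assumes "0 \<le> p" "p \<le> 1" "\<bar>\<theta>\<bar> \<le> 1"
  shows "p * exp (\<theta> * (1 - p)) + (1 - p) * exp (- \<theta> * p) \<le> exp (\<theta>\<^sup>2 * (p * (1 - p)))"
proof -
  have a1: "\<bar>\<theta> * (1 - p)\<bar> \<le> 1" using assms by (simp add: abs_mult mult_le_one)
  have a2: "\<bar>- \<theta> * p\<bar> \<le> 1" using assms by (simp add: abs_mult mult_le_one)
  have "p * exp (\<theta> * (1 - p)) + (1 - p) * exp (- \<theta> * p)
     \<le> p * (1 + \<theta> * (1 - p) + (\<theta> * (1 - p))\<^sup>2) + (1 - p) * (1 + - \<theta> * p + (- \<theta> * p)\<^sup>2)"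
    using assms exp_quad_bound[OF a1] exp_quad_bound[OF a2]
    by (intro add_mono mult_left_mono) auto
  also have "\<dots> = 1 + \<theta>\<^sup>2 * (p * (1 - p))" by (simp add: algebra_simps power2_eq_square)
  also have "\<dots> \<le> exp (\<theta>\<^sup>2 * (p * (1 - p)))" by (rule exp_ge_add_one_self)
  finally show ?thesis .
qed

definition Jint :: "real \<Rightarrow> real \<Rightarrow> ennreal" where
  "Jint r H = (\<integral>\<^sup>+\<eta>. ennreal (indicator {-r..r} \<eta> * exp (- H * \<eta>\<^sup>2)) \<partial>lborel)"

lemma Jint_scale:
  assumes k: "k > 0"
  shows "Jint r H = ennreal k * Jint (r / k) (H * k\<^sup>2)"
proof -
  have "Jint r H = ennreal \<bar>k\<bar> * (\<integral>\<^sup>+x. ennreal (indicator {-r..r} (0 + k * x) * exp (- H * (0 + k * x)\<^sup>2)) \<partial>lborel)"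
    unfolding Jint_def using k by (intro nn_integral_real_affine) auto
  also have "(\<lambda>x. ennreal (indicator {-r..r} (0 + k * x) * exp (- H * (0 + k * x)\<^sup>2)))
      = (\<lambda>x. ennreal (indicator {-(r/k)..r/k} x * exp (- (H * k\<^sup>2) * x\<^sup>2)))"
  proof
    fix x
    have "(k * x \<in> {-r..r}) = (x \<in> {-(r/k)..r/k})" using k
      by (auto simp: field_simps)
    then show "ennreal (indicator {-r..r} (0 + k * x) * exp (- H * (0 + k * x)\<^sup>2)) =
          ennreal (indicator {-(r/k)..r/k} x * exp (- (H * k\<^sup>2) * x\<^sup>2))"
      by (simp add: indicator_def power_mult_distrib algebra_simps)
  qed
  finally show ?thesis using k by (simp add: Jint_def)
qed

lemma Jint_mono_r:
  assumes "r \<le> r'" shows "Jint r H \<le> Jint r' H"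
  unfolding Jint_def using assms
  by (intro nn_integral_mono) (auto simp: indicator_def)

lemma Jint_mono_H:
  assumes "H' \<le> H" shows "Jint r H \<le> Jint r H'"
  unfolding Jint_def using assms
  by (intro nn_integral_mono) (auto simp: indicator_def mult_right_mono)

lemma Jint_ratio:
  assumes lam: "0 < lam" and H: "lam \<le> H"
  shows "Jint 1 lam \<le> ennreal (2 * sqrt (H / lam)) * Jint (1/2) H"
proof -
  have D: "Jint 1 lam = ennreal 2 * Jint (1/2) (4 * lam)"
    using Jint_scale[of 2 1 lam] by (simp add: mult.commute)
  have sq1: "1 \<le> sqrt (H / lam)" using lam H by simp
  show ?thesis
  proof (cases "H \<le> 4 * lam")
    case True
    have "Jint 1 lam \<le> ennreal 2 * Jint (1/2) H"
      unfolding D by (intro mult_left_mono Jint_mono_H True) auto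
    also have "\<dots> \<le> ennreal (2 * sqrt (H / lam)) * Jint (1/2) H"
      using sq1 by (intro mult_right_mono) auto
    finally show ?thesis .
  next
    case False
    define k where "k = sqrt (4 * lam / H)"
    have k0: "0 < k" unfolding k_def using lam H by simp
    have k1: "k \<le> 1" unfolding k_def using False lam by simp
    have kk: "H * k\<^sup>2 = 4 * lam" unfolding k_def using lam H by simp
    have "Jint (1/2) H = ennreal k * Jint (1/2/k) (4 * lam)"
      using Jint_scale[OF k0, of "1/2" H] kk by simp
    also have "\<dots> \<ge> ennreal k * Jint (1/2) (4 * lam)"
      using k0 k1 by (intro mult_left_mono Jint_mono_r) (auto simp: field_simps)
    finally have J: "ennreal k * Jint (1/2) (4 * lam) \<le> Jint (1/2) H" .
    have e: "2 * sqrt (H / lam) * k = 4"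
      unfolding k_def using lam H
      by (simp add: real_sqrt_mult[symmetric] field_simps)
    have "Jint 1 lam = ennreal 2 * Jint (1/2) (4 * lam)" by (rule D)
    also have "\<dots> \<le> ennreal (2 * sqrt (H / lam)) * (ennreal k * Jint (1/2) (4 * lam))"
    proof -
      have "ennreal 2 \<le> ennreal (2 * sqrt (H / lam)) * ennreal k"
        using e k0 lam H by (simp add: ennreal_mult[symmetric] mult.commute)
      then show ?thesis by (simp add: mult.assoc[symmetric] mult_right_mono)
    qed
    also have "\<dots> \<le> ennreal (2 * sqrt (H / lam)) * Jint (1/2) H"
      by (intro mult_left_mono J) auto
    finally show ?thesis .
  qed
qed

lemma ennreal_two_mult: "0 \<le> (y::real) \<Longrightarrow> ennreal (2 * y) = 2 * ennreal y"
  by (simp add: ennreal_mult)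

lemma Kint_sym:
  fixes a H :: real
  shows "Jint (1/2) H \<le> (\<integral>\<^sup>+\<eta>. ennreal (indicator {-1/2..1/2} \<eta> * exp (a * \<eta> - H * \<eta>\<^sup>2)) \<partial>lborel)"
    (is "_ \<le> ?K a")
proof -
  have sym: "?K a = ?K (-a)"
  proof -
    have "?K a = ennreal \<bar>-1\<bar> * (\<integral>\<^sup>+x. ennreal (indicator {-1/2..1/2} (0 + -1 * x) * exp (a * (0 + -1 * x) - H * (0 + -1 * x)\<^sup>2)) \<partial>lborel)"
      by (intro nn_integral_real_affine) auto
    also have "\<dots> = ?K (-a)"
      by (simp add: indicator_def) (intro nn_integral_cong, auto)
    finally show ?thesis .
  qed
  have "ennreal 2 * Jint (1/2) H = (\<integral>\<^sup>+\<eta>. ennreal (indicator {-1/2..1/2} \<eta> * (2 * exp (- H * \<eta>\<^sup>2))) \<partial>lborel)"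
    unfolding Jint_def
    by (subst nn_integral_cmult[symmetric]) (auto intro!: nn_integral_cong simp: ennreal_two_mult indicator_def)
  also have "\<dots> \<le> (\<integral>\<^sup>+\<eta>. ennreal (indicator {-1/2..1/2} \<eta> * exp (a * \<eta> - H * \<eta>\<^sup>2)) + ennreal (indicator {-1/2..1/2} \<eta> * exp (-a * \<eta> - H * \<eta>\<^sup>2)) \<partial>lborel)"
  proof (intro nn_integral_mono)
    fix \<eta> :: real
    have "2 \<le> exp (a * \<eta>) + exp (- (a * \<eta>))"
    proof -
      have "0 \<le> (exp (a * \<eta> / 2) - exp (- (a * \<eta>) / 2))\<^sup>2" by simp
      also have "\<dots> = exp (a * \<eta>) + exp (- (a * \<eta>)) - 2"
        by (simp add: power2_eq_square algebra_simps exp_add[symmetric])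
      finally show ?thesis by simp
    qed
    then have "2 * exp (- H * \<eta>\<^sup>2) \<le> exp (a * \<eta> - H * \<eta>\<^sup>2) + exp (-a * \<eta> - H * \<eta>\<^sup>2)"
      by (simp add: exp_diff exp_minus field_simps)
    then show "ennreal (indicator {-1/2..1/2} \<eta> * (2 * exp (- H * \<eta>\<^sup>2))) \<le>
      ennreal (indicator {-1/2..1/2} \<eta> * exp (a * \<eta> - H * \<eta>\<^sup>2)) + ennreal (indicator {-1/2..1/2} \<eta> * exp (-a * \<eta> - H * \<eta>\<^sup>2))"
      by (auto simp: indicator_def ennreal_plus[symmetric] simp del: ennreal_plus)
  qed
  also have "\<dots> = ?K a + ?K (-a)"
    by (intro nn_integral_add) auto
  also have "\<dots> = ennreal 2 * ?K a" using sym by (simp add: mult_2)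
  finally have "ennreal 2 * Jint (1/2) H \<le> ennreal 2 * ?K a" .
  then show ?thesis
    by (simp add: ennreal_mult_le_mult_iff)
qed

lemma shift_lower:
  fixes \<theta> S H :: real
  assumes th: "\<bar>\<theta>\<bar> \<le> 1/2"
  shows "ennreal (exp (\<theta> * S - \<theta>\<^sup>2 * H)) * Jint (1/2) H
     \<le> (\<integral>\<^sup>+\<xi>. ennreal (indicator {-1..1} \<xi> * exp (\<xi> * S - \<xi>\<^sup>2 * H)) \<partial>lborel)"
proof -
  define a where "a = S - 2 * \<theta> * H"
  have "ennreal (exp (\<theta> * S - \<theta>\<^sup>2 * H)) * Jint (1/2) H \<le>
        ennreal (exp (\<theta> * S - \<theta>\<^sup>2 * H)) * (\<integral>\<^sup>+\<eta>. ennreal (indicator {-1/2..1/2} \<eta> * exp (a * \<eta> - H * \<eta>\<^sup>2)) \<partial>lborel)"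
    by (intro mult_left_mono Kint_sym) auto
  also have "\<dots> = (\<integral>\<^sup>+\<eta>. ennreal (indicator {-1/2..1/2} \<eta> * exp ((\<theta> + \<eta>) * S - (\<theta> + \<eta>)\<^sup>2 * H)) \<partial>lborel)"
    by (subst nn_integral_cmult[symmetric])
       (auto intro!: nn_integral_cong simp: ennreal_mult[symmetric] indicator_def a_def
          exp_add[symmetric] power2_eq_square algebra_simps)
  also have "\<dots> = (\<integral>\<^sup>+\<eta>. ennreal (indicator {\<theta>-1/2..\<theta>+1/2} (\<theta> + 1 * \<eta>) * exp ((\<theta> + 1 * \<eta>) * S - (\<theta> + 1 * \<eta>)\<^sup>2 * H)) \<partial>lborel)"
    by (intro nn_integral_cong) (auto simp: indicator_def)
  also have "\<dots> = (\<integral>\<^sup>+\<xi>. ennreal (indicator {\<theta>-1/2..\<theta>+1/2} \<xi> * exp (\<xi> * S - \<xi>\<^sup>2 * H)) \<partial>lborel)"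
    using nn_integral_real_affine[of "\<lambda>\<xi>. ennreal (indicator {\<theta>-1/2..\<theta>+1/2} \<xi> * exp (\<xi> * S - \<xi>\<^sup>2 * H))" 1 \<theta>]
    by simp
  also have "\<dots> \<le> (\<integral>\<^sup>+\<xi>. ennreal (indicator {-1..1} \<xi> * exp (\<xi> * S - \<xi>\<^sup>2 * H)) \<partial>lborel)"
    using th by (intro nn_integral_mono) (auto simp: indicator_def)
  finally show ?thesis .
qed

lemma mix_lower:
  fixes \<theta> S H lam :: real
  assumes th: "\<bar>\<theta>\<bar> \<le> 1/2" and lam: "0 < lam" and H: "lam \<le> H"
  shows "ennreal (exp (\<theta> * S - \<theta>\<^sup>2 * H)) * Jint 1 lam
     \<le> ennreal (2 * sqrt (H / lam)) * (\<integral>\<^sup>+\<xi>. ennreal (indicator {-1..1} \<xi> * exp (\<xi> * S - \<xi>\<^sup>2 * H)) \<partial>lborel)"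
proof -
  have "ennreal (exp (\<theta> * S - \<theta>\<^sup>2 * H)) * Jint 1 lam \<le>
     ennreal (exp (\<theta> * S - \<theta>\<^sup>2 * H)) * (ennreal (2 * sqrt (H / lam)) * Jint (1/2) H)"
    by (intro mult_left_mono Jint_ratio lam H) auto
  also have "\<dots> = ennreal (2 * sqrt (H / lam)) * (ennreal (exp (\<theta> * S - \<theta>\<^sup>2 * H)) * Jint (1/2) H)"
    by (simp add: ac_simps)
  also have "\<dots> \<le> ennreal (2 * sqrt (H / lam)) * (\<integral>\<^sup>+\<xi>. ennreal (indicator {-1..1} \<xi> * exp (\<xi> * S - \<xi>\<^sup>2 * H)) \<partial>lborel)"
    by (intro mult_left_mono shift_lower th) auto
  finally show ?thesis .
qed

lemma filt_mono:
  assumes F_mono: "\<forall>t\<ge>1. sets (F t) \<subseteq> sets (F (Suc t))"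
  shows "1 \<le> s \<Longrightarrow> s \<le> t \<Longrightarrow> sets (F s) \<subseteq> sets (F t)"
proof (induction t)
  case 0 then show ?case by simp
next
  case (Suc t)
  show ?case
  proof (cases "s = Suc t")
    case True then show ?thesis by simp
  next
    case False
    then have "s \<le> t" using Suc by simp
    then show ?thesis using Suc F_mono by (meson order_trans le_trans Suc.prems(1))
  qed
qed

lemma ville:
  fixes N :: "nat \<Rightarrow> 'w \<Rightarrow> ennreal" and c :: real and K :: ennreal
  assumes prob: "prob_space P"
    and F_sub: "\<forall>t\<ge>1. subalgebra P (F t)"
    and F_mono: "\<forall>t\<ge>1. sets (F t) \<subseteq> sets (F (Suc t))"
    and Nmeas: "\<forall>t\<ge>1. N t \<in> borel_measurable (F t)"
    and N1: "(\<integral>\<^sup>+\<omega>. N 1 \<omega> \<partial>P) \<le> K"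
    and super: "\<forall>t\<ge>1. \<forall>A\<in>sets (F t). (\<integral>\<^sup>+\<omega>. N (Suc t) \<omega> * indicator A \<omega> \<partial>P) \<le> (\<integral>\<^sup>+\<omega>. N t \<omega> * indicator A \<omega> \<partial>P)"
    and c: "0 < c"
  shows "ennreal c * emeasure P {\<omega>\<in>space P. \<exists>t\<ge>1. ennreal c \<le> N t \<omega>} \<le> K"
proof -
  have spF: "\<And>t. t \<ge> 1 \<Longrightarrow> space (F t) = space P" using F_sub by (auto simp: subalgebra_def)
  have setsF: "\<And>t. t \<ge> 1 \<Longrightarrow> sets (F t) \<subseteq> sets P" using F_sub by (auto simp: subalgebra_def)
  have NmP: "\<And>t. t \<ge> 1 \<Longrightarrow> N t \<in> borel_measurable P"
    using Nmeas F_sub by (meson measurable_from_subalg)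
  define B where "B t = {\<omega>\<in>space P. ennreal c \<le> N t \<omega>}" for t
  define E where "E T = (\<Union>t\<in>{1..T}. B t)" for T
  have BF: "B t \<in> sets (F t)" if "t \<ge> 1" for t
  proof -
    have m: "N t \<in> borel_measurable (F t)" using Nmeas that by simp
    have "{\<omega>\<in>space (F t). ennreal c \<le> N t \<omega>} \<in> sets (F t)"
      using m by measurable
    then show ?thesis using spF[OF that] by (simp add: B_def)
  qed
  have EF: "E T \<in> sets (F T)" if "T \<ge> 1" for T
    unfolding E_def
  proof (intro sets.finite_UN)
    fix t assume "t \<in> {1..T}"
    then show "B t \<in> sets (F T)" using BF filt_mono[OF F_mono, of t T] by auto
  qed auto
  have EP: "E T \<in> sets P" for T
  proof (cases "T \<ge> 1")
    case True then show ?thesis using EF setsF by blast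
  next
    case False then have "E T = {}" by (auto simp: E_def)
    then show ?thesis by simp
  qed
  have Esub: "E T \<subseteq> space P" for T by (auto simp: E_def B_def)
  define Q where "Q T \<omega> = ennreal c * indicator (E T) \<omega> + N T \<omega> * indicator (space P - E T) \<omega>" for T \<omega>
  have Qm: "Q T \<in> borel_measurable P" if "T \<ge> 1" for T
    unfolding Q_def using NmP[OF that] EP[of T] by measurable
  have Qint: "(\<integral>\<^sup>+\<omega>. Q T \<omega> \<partial>P) \<le> K" if "T \<ge> 1" for T
    using that
  proof (induction T rule: dec_induct)
    case base
    have "(\<integral>\<^sup>+\<omega>. Q 1 \<omega> \<partial>P) \<le> (\<integral>\<^sup>+\<omega>. N 1 \<omega> \<partial>P)"
    proof (intro nn_integral_mono)
      fix \<omega> assume "\<omega> \<in> space P"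
      then show "Q 1 \<omega> \<le> N 1 \<omega>"
        by (auto simp: Q_def E_def B_def indicator_def)
    qed
    then show ?case using N1 by simp
  next
    case (step T)
    have "(\<integral>\<^sup>+\<omega>. Q (Suc T) \<omega> \<partial>P) \<le> (\<integral>\<^sup>+\<omega>. ennreal c * indicator (E T) \<omega> + N (Suc T) \<omega> * indicator (space P - E T) \<omega> \<partial>P)"
    proof (intro nn_integral_mono)
      fix \<omega> assume w: "\<omega> \<in> space P"
      have ES: "E (Suc T) = E T \<union> B (Suc T)" using step.hyps(1)
        unfolding E_def by (subst atLeastAtMostSuc_conv) auto
      show "Q (Suc T) \<omega> \<le> ennreal c * indicator (E T) \<omega> + N (Suc T) \<omega> * indicator (space P - E T) \<omega>"
        using w unfolding Q_def ES by (auto simp: indicator_def B_def)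
    qed
    also have "\<dots> = (\<integral>\<^sup>+\<omega>. ennreal c * indicator (E T) \<omega> \<partial>P) + (\<integral>\<^sup>+\<omega>. N (Suc T) \<omega> * indicator (space P - E T) \<omega> \<partial>P)"
      using NmP[of "Suc T"] EP[of T] by (intro nn_integral_add) auto
    also have "\<dots> \<le> (\<integral>\<^sup>+\<omega>. ennreal c * indicator (E T) \<omega> \<partial>P) + (\<integral>\<^sup>+\<omega>. N T \<omega> * indicator (space P - E T) \<omega> \<partial>P)"
    proof -
      have "space P - E T \<in> sets (F T)"
        using EF[OF step.hyps(1)] spF[OF step.hyps(1)] by (metis sets.compl_sets)
      then show ?thesis using super step.hyps(1) by (intro add_left_mono) auto
    qed
    also have "\<dots> = (\<integral>\<^sup>+\<omega>. Q T \<omega> \<partial>P)"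
      unfolding Q_def using NmP[OF step.hyps(1)] EP[of T] by (intro nn_integral_add[symmetric]) auto
    finally show ?case using step.IH by simp
  qed
  have cE: "ennreal c * emeasure P (E T) \<le> K" if "T \<ge> 1" for T
  proof -
    have "ennreal c * emeasure P (E T) = (\<integral>\<^sup>+\<omega>. ennreal c * indicator (E T) \<omega> \<partial>P)"
      using EP by (simp add: nn_integral_cmult_indicator)
    also have "\<dots> \<le> (\<integral>\<^sup>+\<omega>. Q T \<omega> \<partial>P)"
      by (intro nn_integral_mono) (auto simp: Q_def)
    finally show ?thesis using Qint[OF that] by simp
  qed
  have cE': "ennreal c * emeasure P (E T) \<le> K" for T
  proof (cases "T \<ge> 1")
    case True then show ?thesis by (rule cE)
  next
    case False then have "E T = {}" by (auto simp: E_def)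
    then show ?thesis by simp
  qed
  have inc: "incseq E" unfolding incseq_def E_def
    by (auto 0 3 intro: order_trans)
  have U: "{\<omega>\<in>space P. \<exists>t\<ge>1. ennreal c \<le> N t \<omega>} = (\<Union>T. E T)"
    by (auto 0 4 simp: E_def B_def)
  have "emeasure P (\<Union>T. E T) = (SUP T. emeasure P (E T))"
    using EP inc by (intro SUP_emeasure_incseq[symmetric]) auto
  then have "ennreal c * emeasure P (\<Union>T. E T) = (SUP T. ennreal c * emeasure P (E T))"
    by (simp add: SUP_mult_left_ennreal)
  also have "\<dots> \<le> K" using cE' by (intro SUP_least) auto
  finally show ?thesis using U by simp
qed

lemma adh_ext:
  fixes q :: "'w \<Rightarrow> real" and f :: "'w \<Rightarrow> ennreal"
  assumes prob: "prob_space P" and sub: "subalgebra P Ft"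
    and D: "D \<in> sets P"
    and q: "q \<in> borel_measurable Ft" "\<forall>\<omega>\<in>space P. 0 \<le> q \<omega> \<and> q \<omega> \<le> 1"
    and adh: "\<forall>A\<in>sets Ft. measure P (A \<inter> D) = (LINT \<omega>:A|P. q \<omega>)"
    and f: "f \<in> borel_measurable Ft"
  shows "(\<integral>\<^sup>+\<omega>. f \<omega> * indicator D \<omega> \<partial>P) = (\<integral>\<^sup>+\<omega>. f \<omega> * ennreal (q \<omega>) \<partial>P)"
  using f
proof (induction rule: borel_measurable_induct)
  have spF: "space Ft = space P" and sF: "sets Ft \<subseteq> sets P" using sub by (auto simp: subalgebra_def)
  have qP: "q \<in> borel_measurable P" using q(1) sub by (rule measurable_from_subalg[rotated])
  {
  case (cong f g)
  have "(\<integral>\<^sup>+\<omega>. f \<omega> * indicator D \<omega> \<partial>P) = (\<integral>\<^sup>+\<omega>. g \<omega> * indicator D \<omega> \<partial>P)"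
    using cong.hyps(3) spF by (intro nn_integral_cong) auto
  also have "\<dots> = (\<integral>\<^sup>+\<omega>. g \<omega> * ennreal (q \<omega>) \<partial>P)" by (rule cong.IH)
  also have "\<dots> = (\<integral>\<^sup>+\<omega>. f \<omega> * ennreal (q \<omega>) \<partial>P)"
    using cong.hyps(3) spF by (intro nn_integral_cong) auto
  finally show ?case .
  }
  {
  case (set A)
  then have AP: "A \<in> sets P" using sF by auto
  interpret prob_space P by (rule prob)
  have "(\<integral>\<^sup>+\<omega>. indicator A \<omega> * indicator D \<omega> \<partial>P) = (\<integral>\<^sup>+\<omega>. indicator (A \<inter> D) \<omega> \<partial>P)"
    by (intro nn_integral_cong) (auto simp: indicator_def)
  also have "\<dots> = emeasure P (A \<inter> D)" using AP D by simp
  also have "\<dots> = ennreal (measure P (A \<inter> D))" by (simp add: emeasure_eq_measure)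
  also have "\<dots> = ennreal (\<integral>\<omega>. indicator A \<omega> * q \<omega> \<partial>P)"
    using adh set by (simp add: set_lebesgue_integral_def)
  also have "\<dots> = (\<integral>\<^sup>+\<omega>. ennreal (indicator A \<omega> * q \<omega>) \<partial>P)"
  proof (rule nn_integral_eq_integral[symmetric])
    show "integrable P (\<lambda>\<omega>. indicator A \<omega> * q \<omega>)"
      using AP qP q(2) by (intro integrable_const_bound[where B=1]) (auto simp: indicator_def)
    show "AE x in P. 0 \<le> indicator A x * q x"
      using q(2) by (intro AE_I2) (auto simp: indicator_def)
  qed
  also have "\<dots> = (\<integral>\<^sup>+\<omega>. indicator A \<omega> * ennreal (q \<omega>) \<partial>P)"
    by (intro nn_integral_cong) (auto simp: indicator_def)
  finally show ?case .
  }
  {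
  case (mult u c)
  have uP: "u \<in> borel_measurable P" using mult.hyps(2) sub by (rule measurable_from_subalg[rotated])
  have "(\<integral>\<^sup>+\<omega>. c * u \<omega> * indicator D \<omega> \<partial>P) = c * (\<integral>\<^sup>+\<omega>. u \<omega> * indicator D \<omega> \<partial>P)"
    using uP D by (subst nn_integral_cmult[symmetric]) (auto simp: mult.assoc)
  also have "\<dots> = c * (\<integral>\<^sup>+\<omega>. u \<omega> * ennreal (q \<omega>) \<partial>P)" using mult.IH by simp
  also have "\<dots> = (\<integral>\<^sup>+\<omega>. c * u \<omega> * ennreal (q \<omega>) \<partial>P)"
    using uP qP by (subst nn_integral_cmult[symmetric]) (auto simp: mult.assoc)
  finally show ?case .
  }
  {
  case (add u v)
  have uP: "u \<in> borel_measurable P" using add.hyps(1) sub by (rule measurable_from_subalg[rotated])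
  have vP: "v \<in> borel_measurable P" using add.hyps(3) sub by (rule measurable_from_subalg[rotated])
  have "(\<integral>\<^sup>+\<omega>. (v \<omega> + u \<omega>) * indicator D \<omega> \<partial>P) = (\<integral>\<^sup>+\<omega>. v \<omega> * indicator D \<omega> + u \<omega> * indicator D \<omega> \<partial>P)"
    by (simp add: distrib_right)
  also have "\<dots> = (\<integral>\<^sup>+\<omega>. v \<omega> * indicator D \<omega> \<partial>P) + (\<integral>\<^sup>+\<omega>. u \<omega> * indicator D \<omega> \<partial>P)"
    using uP vP D by (intro nn_integral_add) auto
  also have "\<dots> = (\<integral>\<^sup>+\<omega>. v \<omega> * ennreal (q \<omega>) \<partial>P) + (\<integral>\<^sup>+\<omega>. u \<omega> * ennreal (q \<omega>) \<partial>P)"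
    using add.IH by simp
  also have "\<dots> = (\<integral>\<^sup>+\<omega>. v \<omega> * ennreal (q \<omega>) + u \<omega> * ennreal (q \<omega>) \<partial>P)"
    using uP vP qP by (intro nn_integral_add[symmetric]) auto
  also have "\<dots> = (\<integral>\<^sup>+\<omega>. (v \<omega> + u \<omega>) * ennreal (q \<omega>) \<partial>P)"
    by (simp add: distrib_right)
  finally show ?case .
  }
  {
  case (seq U)
  have UP: "U i \<in> borel_measurable P" for i using seq.hyps(1) sub by (rule measurable_from_subalg[rotated])
  have "(\<integral>\<^sup>+\<omega>. (SUP i. U i) \<omega> * indicator D \<omega> \<partial>P) = (\<integral>\<^sup>+\<omega>. (SUP i. U i \<omega> * indicator D \<omega>) \<partial>P)"
    by (simp only: SUP_apply SUP_mult_right_ennreal)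
  also have "\<dots> = (SUP i. (\<integral>\<^sup>+\<omega>. U i \<omega> * indicator D \<omega> \<partial>P))"
  proof (rule nn_integral_monotone_convergence_SUP)
    show "incseq (\<lambda>i \<omega>. U i \<omega> * indicator D \<omega>)"
      using seq.hyps(3) by (auto simp: incseq_def le_fun_def intro: mult_right_mono)
    show "(\<lambda>\<omega>. U i \<omega> * indicator D \<omega>) \<in> borel_measurable P" for i using UP D by auto
  qed
  also have "\<dots> = (SUP i. (\<integral>\<^sup>+\<omega>. U i \<omega> * ennreal (q \<omega>) \<partial>P))" using seq.IH by simp
  also have "\<dots> = (\<integral>\<^sup>+\<omega>. (SUP i. U i \<omega> * ennreal (q \<omega>)) \<partial>P)"
  proof (rule nn_integral_monotone_convergence_SUP[symmetric])
    show "incseq (\<lambda>i \<omega>. U i \<omega> * ennreal (q \<omega>))"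
      using seq.hyps(3) by (auto simp: incseq_def le_fun_def intro: mult_right_mono)
    show "(\<lambda>\<omega>. U i \<omega> * ennreal (q \<omega>)) \<in> borel_measurable P" for i using UP qP by auto
  qed
  also have "\<dots> = (\<integral>\<^sup>+\<omega>. (SUP i. U i) \<omega> * ennreal (q \<omega>) \<partial>P)"
    by (simp only: SUP_apply SUP_mult_right_ennreal)
  finally show ?case .
  }
qed

lemma bern_step_real:
  fixes Zv Iv pv \<xi> :: real
  assumes "Iv \<in> {0,1}" "0 \<le> pv" "pv \<le> 1" "\<bar>\<xi>\<bar> \<le> 1"
  shows "exp (Zv + \<xi> * (Iv * (1 - pv)) - \<xi>\<^sup>2 * (Iv * (pv * (1 - pv)))) * (Iv * pv)
       + exp (Zv + \<xi> * (Iv * (0 - pv)) - \<xi>\<^sup>2 * (Iv * (pv * (1 - pv)))) * (1 - Iv * pv) \<le> exp Zv"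
proof (cases "Iv = 0")
  case True then show ?thesis by simp
next
  case False
  then have I1: "Iv = 1" using assms(1) by auto
  have b: "pv * exp (\<xi> * (1 - pv)) + (1 - pv) * exp (- \<xi> * pv) \<le> exp (\<xi>\<^sup>2 * (pv * (1 - pv)))"
    using bern_mgf assms by blast
  have "exp (Zv + \<xi> * (1 - pv) - \<xi>\<^sup>2 * (pv * (1 - pv))) * pv
       + exp (Zv + \<xi> * (0 - pv) - \<xi>\<^sup>2 * (pv * (1 - pv))) * (1 - pv)
     = exp Zv * exp (- (\<xi>\<^sup>2 * (pv * (1 - pv)))) * (pv * exp (\<xi> * (1 - pv)) + (1 - pv) * exp (- \<xi> * pv))"
    by (simp add: exp_add[symmetric] exp_diff algebra_simps exp_minus field_simps)
  also have "\<dots> \<le> exp Zv * exp (- (\<xi>\<^sup>2 * (pv * (1 - pv)))) * exp (\<xi>\<^sup>2 * (pv * (1 - pv)))"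
    by (intro mult_left_mono b) auto
  also have "\<dots> = exp Zv" by (simp add: exp_minus)
  finally show ?thesis using I1 by simp
qed

lemma one_step:
  fixes Z I p dd :: "'w \<Rightarrow> real" and \<xi> :: real
  assumes prob: "prob_space P" and sub: "subalgebra P Ft"
    and meas: "Z \<in> borel_measurable Ft" "I \<in> borel_measurable Ft" "p \<in> borel_measurable Ft" "dd \<in> borel_measurable P"
    and vals: "\<forall>\<omega>\<in>space P. I \<omega> \<in> {0,1} \<and> 0 \<le> p \<omega> \<and> p \<omega> \<le> 1 \<and> dd \<omega> \<in> {0,1}"
    and adh: "\<forall>A\<in>sets Ft. measure P (A \<inter> {\<omega>\<in>space P. dd \<omega> = 1}) = (LINT \<omega>:A|P. I \<omega> * p \<omega>)"
    and xi: "\<bar>\<xi>\<bar> \<le> 1" and A: "A \<in> sets Ft"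
  shows "(\<integral>\<^sup>+\<omega>. ennreal (exp (Z \<omega> + \<xi> * (I \<omega> * (dd \<omega> - p \<omega>)) - \<xi>\<^sup>2 * (I \<omega> * (p \<omega> * (1 - p \<omega>))))) * indicator A \<omega> \<partial>P)
     \<le> (\<integral>\<^sup>+\<omega>. ennreal (exp (Z \<omega>)) * indicator A \<omega> \<partial>P)"
proof -
  interpret prob_space P by (rule prob)
  have spF: "space Ft = space P" and sF: "sets Ft \<subseteq> sets P" using sub by (auto simp: subalgebra_def)
  have AP: "A \<in> sets P" using A sF by auto
  have [measurable]: "Z \<in> borel_measurable P" "I \<in> borel_measurable P" "p \<in> borel_measurable P"
    using meas sub by (auto intro: measurable_from_subalg)
  have [measurable]: "dd \<in> borel_measurable P" by (rule meas)
  define D1 where "D1 = {\<omega>\<in>space P. dd \<omega> = 1}"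
  define D0 where "D0 = {\<omega>\<in>space P. dd \<omega> = 0}"
  have D1P: "D1 \<in> sets P" unfolding D1_def by measurable
  have D0P: "D0 \<in> sets P" unfolding D0_def by measurable
  have q1: "(\<lambda>\<omega>. I \<omega> * p \<omega>) \<in> borel_measurable Ft" using meas by measurable
  have q0: "(\<lambda>\<omega>. 1 - I \<omega> * p \<omega>) \<in> borel_measurable Ft" using meas by measurable
  have qv: "\<forall>\<omega>\<in>space P. 0 \<le> I \<omega> * p \<omega> \<and> I \<omega> * p \<omega> \<le> 1" using vals by auto
  have qv0: "\<forall>\<omega>\<in>space P. 0 \<le> 1 - I \<omega> * p \<omega> \<and> 1 - I \<omega> * p \<omega> \<le> 1" using vals by auto
  have adh1: "\<forall>A\<in>sets Ft. measure P (A \<inter> D1) = (LINT \<omega>:A|P. I \<omega> * p \<omega>)" using adh by (simp add: D1_def)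
  have adh0: "\<forall>A\<in>sets Ft. measure P (A \<inter> D0) = (LINT \<omega>:A|P. 1 - I \<omega> * p \<omega>)"
  proof
    fix B assume B: "B \<in> sets Ft"
    then have BP: "B \<in> sets P" using sF by auto
    have "B \<inter> D0 = B - (B \<inter> D1)" using vals sets.sets_into_space[OF BP]
      by (auto simp: D0_def D1_def)
    then have "measure P (B \<inter> D0) = measure P B - measure P (B \<inter> D1)"
      using BP D1P by (simp add: measure_Diff)
    also have "\<dots> = (\<integral>\<omega>. indicator B \<omega> \<partial>P) - (\<integral>\<omega>. indicator B \<omega> * (I \<omega> * p \<omega>) \<partial>P)"
      using adh1 B BP by (simp add: set_lebesgue_integral_def)
    also have "\<dots> = (\<integral>\<omega>. indicator B \<omega> - indicator B \<omega> * (I \<omega> * p \<omega>) \<partial>P)"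
    proof (rule Bochner_Integration.integral_diff[symmetric])
      show "integrable P (indicator B :: 'w \<Rightarrow> real)" using BP by (intro integrable_const_bound[where B=1]) (auto simp: indicator_def)
      show "integrable P (\<lambda>\<omega>. indicator B \<omega> * (I \<omega> * p \<omega>))"
        using BP qv by (intro integrable_const_bound[where B=1]) (auto simp: indicator_def)
    qed
    also have "\<dots> = (LINT \<omega>:B|P. 1 - I \<omega> * p \<omega>)"
      by (simp add: set_lebesgue_integral_def algebra_simps)
    finally show "measure P (B \<inter> D0) = (LINT \<omega>:B|P. 1 - I \<omega> * p \<omega>)" .
  qed
  define Y1 where "Y1 \<omega> = ennreal (exp (Z \<omega> + \<xi> * (I \<omega> * (1 - p \<omega>)) - \<xi>\<^sup>2 * (I \<omega> * (p \<omega> * (1 - p \<omega>))))) * indicator A \<omega>" for \<omega>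
  define Y0 where "Y0 \<omega> = ennreal (exp (Z \<omega> + \<xi> * (I \<omega> * (0 - p \<omega>)) - \<xi>\<^sup>2 * (I \<omega> * (p \<omega> * (1 - p \<omega>))))) * indicator A \<omega>" for \<omega>
  have Y1F: "Y1 \<in> borel_measurable Ft" unfolding Y1_def using meas A by measurable
  have Y0F: "Y0 \<in> borel_measurable Ft" unfolding Y0_def using meas A by measurable
  have Y1P[measurable]: "Y1 \<in> borel_measurable P" using Y1F sub by (auto intro: measurable_from_subalg)
  have Y0P[measurable]: "Y0 \<in> borel_measurable P" using Y0F sub by (auto intro: measurable_from_subalg)
  have "(\<integral>\<^sup>+\<omega>. ennreal (exp (Z \<omega> + \<xi> * (I \<omega> * (dd \<omega> - p \<omega>)) - \<xi>\<^sup>2 * (I \<omega> * (p \<omega> * (1 - p \<omega>))))) * indicator A \<omega> \<partial>P)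
      = (\<integral>\<^sup>+\<omega>. Y1 \<omega> * indicator D1 \<omega> + Y0 \<omega> * indicator D0 \<omega> \<partial>P)"
  proof (intro nn_integral_cong)
    fix \<omega> assume w: "\<omega> \<in> space P"
    then have "dd \<omega> = 0 \<or> dd \<omega> = 1" using vals by auto
    then show "ennreal (exp (Z \<omega> + \<xi> * (I \<omega> * (dd \<omega> - p \<omega>)) - \<xi>\<^sup>2 * (I \<omega> * (p \<omega> * (1 - p \<omega>))))) * indicator A \<omega>
      = Y1 \<omega> * indicator D1 \<omega> + Y0 \<omega> * indicator D0 \<omega>"
      using w by (auto simp: Y1_def Y0_def D1_def D0_def)
  qed
  also have "\<dots> = (\<integral>\<^sup>+\<omega>. Y1 \<omega> * indicator D1 \<omega> \<partial>P) + (\<integral>\<^sup>+\<omega>. Y0 \<omega> * indicator D0 \<omega> \<partial>P)"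
    using D1P D0P by (intro nn_integral_add) auto
  also have "\<dots> = (\<integral>\<^sup>+\<omega>. Y1 \<omega> * ennreal (I \<omega> * p \<omega>) \<partial>P) + (\<integral>\<^sup>+\<omega>. Y0 \<omega> * ennreal (1 - I \<omega> * p \<omega>) \<partial>P)"
    using adh_ext[OF prob sub D1P q1 qv adh1 Y1F] adh_ext[OF prob sub D0P q0 qv0 adh0 Y0F] by simp
  also have "\<dots> = (\<integral>\<^sup>+\<omega>. Y1 \<omega> * ennreal (I \<omega> * p \<omega>) + Y0 \<omega> * ennreal (1 - I \<omega> * p \<omega>) \<partial>P)"
    by (intro nn_integral_add[symmetric]) auto
  also have "\<dots> \<le> (\<integral>\<^sup>+\<omega>. ennreal (exp (Z \<omega>)) * indicator A \<omega> \<partial>P)"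
  proof (intro nn_integral_mono)
    fix \<omega> assume w: "\<omega> \<in> space P"
    have v: "I \<omega> \<in> {0,1}" "0 \<le> p \<omega>" "p \<omega> \<le> 1" using vals w by auto
    have r: "exp (Z \<omega> + \<xi> * (I \<omega> * (1 - p \<omega>)) - \<xi>\<^sup>2 * (I \<omega> * (p \<omega> * (1 - p \<omega>)))) * (I \<omega> * p \<omega>)
       + exp (Z \<omega> + \<xi> * (I \<omega> * (0 - p \<omega>)) - \<xi>\<^sup>2 * (I \<omega> * (p \<omega> * (1 - p \<omega>)))) * (1 - I \<omega> * p \<omega>) \<le> exp (Z \<omega>)"
      using bern_step_real[OF v xi] by simp
    have n1: "0 \<le> I \<omega> * p \<omega>" "0 \<le> 1 - I \<omega> * p \<omega>" using qv w by auto
    show "Y1 \<omega> * ennreal (I \<omega> * p \<omega>) + Y0 \<omega> * ennreal (1 - I \<omega> * p \<omega>) \<le> ennreal (exp (Z \<omega>)) * indicator A \<omega>"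
    proof (cases "\<omega> \<in> A")
      case True
      then show ?thesis using r n1
        by (simp add: Y1_def Y0_def ennreal_mult''[symmetric] ennreal_plus[symmetric] del: ennreal_plus)
    next
      case False then show ?thesis by (simp add: Y1_def Y0_def)
    qed
  qed
  finally show ?thesis .
qed

lemma sigmoid_alt: "sigmoid z = 1 / (1 + exp (- z))" by (simp add: sigmoid_def)

lemma opos: "0 < 1 + exp (- (z::real))" by (intro add_pos_pos) auto

lemma sigmoid_pos: "0 < sigmoid z" and sigmoid_lt1: "sigmoid z < 1"
proof -
  have "0 < exp (- z)" by simp
  then show "0 < sigmoid z" "sigmoid z < 1" using opos[of z] by (auto simp: sigmoid_def field_simps)
qed

lemma one_minus_sigmoid: "1 - sigmoid z = exp (- z) / (1 + exp (- z))"
proof -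
  have "0 < 1 + exp (- z)" by (rule opos)
  then show ?thesis by (simp add: sigmoid_def field_simps)
qed

lemma ln_sigmoid: "ln (sigmoid z) = - ln (1 + exp (- z))"
proof -
  have p: "0 < 1 + exp (- z)" by (rule opos)
  have "ln (1 / (1 + exp (- z))) = ln 1 - ln (1 + exp (- z))" using p ln_div[of 1 "1 + exp (- z)"] by simp
  then show ?thesis by (simp add: sigmoid_def)
qed

lemma ln_one_minus_sigmoid: "ln (1 - sigmoid z) = - z - ln (1 + exp (- z))"
proof -
  have p: "0 < 1 + exp (- z)" by (rule opos)
  show ?thesis using p ln_div[of "exp (- z)" "1 + exp (- z)"] by (simp add: one_minus_sigmoid)
qed

lemma sigmoid'_exp: "sigmoid' z = exp (- z) / (1 + exp (- z))\<^sup>2"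
proof -
  have "sigmoid' z = sigmoid z * (1 - sigmoid z)" by (simp add: sigmoid'_def)
  also have "\<dots> = (1 / (1 + exp (- z))) * (exp (- z) / (1 + exp (- z)))"
    by (subst one_minus_sigmoid) (simp add: sigmoid_alt)
  also have "\<dots> = exp (- z) / (1 + exp (- z))\<^sup>2" by (simp add: power2_eq_square)
  finally show ?thesis .
qed

lemma sigmoid'_cosh: "sigmoid' z = 1 / (exp (z/2) + exp (- z/2))\<^sup>2"
proof -
  have p: "0 < 1 + exp (- z)" by (rule opos)
  have e: "(exp (z/2) + exp (- z/2))\<^sup>2 = exp z * (1 + exp (- z))\<^sup>2"
    by (simp add: power2_eq_square algebra_simps exp_add[symmetric])
  have "sigmoid' z = exp (- z) / (1 + exp (- z))\<^sup>2" by (rule sigmoid'_exp)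
  also have "\<dots> = 1 / (exp z * (1 + exp (- z))\<^sup>2)"
    using p by (simp add: exp_minus field_simps)
  finally show ?thesis using e by simp
qed

lemma sigmoid'_pos: "0 < sigmoid' z"
  unfolding sigmoid'_def using sigmoid_pos[of z] sigmoid_lt1[of z] by simp

lemma sigmoid'_ratio: "exp (- \<bar>z - w\<bar>) * sigmoid' w \<le> sigmoid' z"
proof -
  define b where "b = z - w"
  have cz: "exp (z/2) + exp (- z/2) \<le> exp (\<bar>b\<bar>/2) * (exp (w/2) + exp (- w/2))"
  proof -
    have "exp (z/2) = exp (b/2) * exp (w/2)" by (simp add: b_def exp_add[symmetric] field_simps)
    moreover have "exp (- z/2) = exp (- b/2) * exp (- w/2)" by (simp add: b_def exp_add[symmetric] field_simps)
    moreover have "exp (b/2) \<le> exp (\<bar>b\<bar>/2)" "exp (- b/2) \<le> exp (\<bar>b\<bar>/2)" by auto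
    ultimately show ?thesis
      by (simp add: distrib_left) (intro add_mono mult_right_mono; simp)
  qed
  have pz: "0 < exp (z/2) + exp (- z/2)" by (intro add_pos_pos) auto
  have pw: "0 < exp (w/2) + exp (- w/2)" by (intro add_pos_pos) auto
  have sq: "(exp (z/2) + exp (- z/2))\<^sup>2 \<le> exp \<bar>b\<bar> * (exp (w/2) + exp (- w/2))\<^sup>2"
  proof -
    have "(exp (z/2) + exp (- z/2))\<^sup>2 \<le> (exp (\<bar>b\<bar>/2) * (exp (w/2) + exp (- w/2)))\<^sup>2"
      using cz pz by (intro power_mono) auto
    also have "\<dots> = exp \<bar>b\<bar> * (exp (w/2) + exp (- w/2))\<^sup>2"
      by (simp add: power_mult_distrib power2_eq_square exp_add[symmetric])
    finally show ?thesis .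
  qed
  have "exp (- \<bar>b\<bar>) * sigmoid' w = 1 / (exp \<bar>b\<bar> * (exp (w/2) + exp (- w/2))\<^sup>2)"
    by (simp add: sigmoid'_cosh exp_minus field_simps)
  also have "\<dots> \<le> 1 / (exp (z/2) + exp (- z/2))\<^sup>2"
    using sq pz pw by (intro divide_left_mono) (auto intro!: mult_pos_pos)
  finally show ?thesis by (simp add: sigmoid'_cosh b_def)
qed

lemma sigmoid_deriv: "(sigmoid has_real_derivative sigmoid' z) (at z)"
proof -
  have p: "1 + exp (- z) \<noteq> 0" using opos[of z] by linarith
  have "((\<lambda>z. 1 / (1 + exp (- z))) has_real_derivative
      (- (0 + exp (- z) * (- 1)) / (1 + exp (- z))\<^sup>2)) (at z)"
    using p by (auto intro!: derivative_eq_intros simp: power2_eq_square)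
  moreover have "(- (0 + exp (- z) * (- 1)) / (1 + exp (- z))\<^sup>2) = sigmoid' z"
  proof -
    have q: "0 < 1 + exp (- z)" by (rule opos)
    show ?thesis by (simp add: sigmoid'_exp)
  qed
  ultimately show ?thesis unfolding sigmoid_def[abs_def] by simp
qed

lemma sigmoid_mono: "a \<le> b \<Longrightarrow> sigmoid a \<le> sigmoid b"
proof -
  assume "a \<le> b"
  then have "exp (- b) \<le> exp (- a)" by simp
  then show ?thesis unfolding sigmoid_def
    using opos[of a] opos[of b] by (intro divide_left_mono) (auto intro!: mult_pos_pos)
qed

lemma sigmoid_diff_lower:
  "exp (- \<bar>b - a\<bar>) * sigmoid' a * \<bar>b - a\<bar> \<le> \<bar>sigmoid b - sigmoid a\<bar>"
proof (cases a b rule: linorder_cases)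
  case less
  obtain z where z: "a < z" "z < b" "sigmoid b - sigmoid a = (b - a) * sigmoid' z"
    using MVT2[OF less, of sigmoid sigmoid'] sigmoid_deriv by blast
  have "exp (- \<bar>b - a\<bar>) * sigmoid' a \<le> exp (- \<bar>z - a\<bar>) * sigmoid' a"
    using z sigmoid'_pos[of a] by (intro mult_right_mono) auto
  also have "\<dots> \<le> sigmoid' z" by (rule sigmoid'_ratio)
  finally show ?thesis using z less by (simp add: abs_mult mult.commute mult_left_mono)
next
  case equal then show ?thesis by simp
next
  case greater
  obtain z where z: "b < z" "z < a" "sigmoid a - sigmoid b = (a - b) * sigmoid' z"
    using MVT2[OF greater, of sigmoid sigmoid'] sigmoid_deriv by blast
  have "exp (- \<bar>b - a\<bar>) * sigmoid' a \<le> exp (- \<bar>z - a\<bar>) * sigmoid' a"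
    using z sigmoid'_pos[of a] by (intro mult_right_mono) auto
  also have "\<dots> \<le> sigmoid' z" by (rule sigmoid'_ratio)
  finally have "exp (- \<bar>b - a\<bar>) * sigmoid' a * (a - b) \<le> sigmoid' z * (a - b)"
    using greater by (intro mult_right_mono) auto
  then show ?thesis using z greater by (simp add: abs_if algebra_simps)
qed

lemma term_lower_ge:
  assumes "b \<le> a" "a - b \<le> K"
  shows "exp (- K) * sigmoid' a * (a - b) \<le> sigmoid a - sigmoid b"
proof -
  have "exp (- K) * sigmoid' a * (a - b) \<le> exp (- \<bar>b - a\<bar>) * sigmoid' a * \<bar>b - a\<bar>"
    using assms sigmoid'_pos[of a] by (intro mult_right_mono mult_mono) auto
  also have "\<dots> \<le> \<bar>sigmoid b - sigmoid a\<bar>" by (rule sigmoid_diff_lower)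
  also have "\<dots> = sigmoid a - sigmoid b" using sigmoid_mono[OF assms(1)] by simp
  finally show ?thesis .
qed

lemma term_lower_le:
  assumes "a \<le> b" "b - a \<le> K"
  shows "exp (- K) * sigmoid' a * (b - a) \<le> sigmoid b - sigmoid a"
proof -
  have "exp (- K) * sigmoid' a * (b - a) \<le> exp (- \<bar>b - a\<bar>) * sigmoid' a * \<bar>b - a\<bar>"
    using assms sigmoid'_pos[of a] by (intro mult_right_mono mult_mono) auto
  also have "\<dots> \<le> \<bar>sigmoid b - sigmoid a\<bar>" by (rule sigmoid_diff_lower)
  also have "\<dots> = sigmoid b - sigmoid a" using sigmoid_mono[OF assms(1)] by simp
  finally show ?thesis .
qed

lemma pen_closed:
  fixes T :: "nat set" and Iv xs ds :: "nat \<Rightarrow> real"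
  shows "(\<Sum>s\<in>T. Iv s * (ds s * ln (sigmoid (xs s + m)) + (1 - ds s) * ln (1 - sigmoid (xs s + m))))
    = (\<Sum>s\<in>T. Iv s * (- (1 - ds s) * (xs s + m) - ln (1 + exp (- (xs s + m)))))"
  by (intro sum.cong refl) (simp add: ln_sigmoid ln_one_minus_sigmoid algebra_simps)

lemma pen_deriv:
  fixes T :: "nat set" and Iv xs ds :: "nat \<Rightarrow> real"
  shows "((\<lambda>m. (\<Sum>s\<in>T. Iv s * (- (1 - ds s) * (xs s + m) - ln (1 + exp (- (xs s + m))))) - lam / 2 * m\<^sup>2)
     has_real_derivative ((\<Sum>s\<in>T. Iv s * (ds s - sigmoid (xs s + m))) - lam * m)) (at m)"
proof -
  have d: "((\<lambda>m. Iv s * (- (1 - ds s) * (xs s + m) - ln (1 + exp (- (xs s + m)))))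
     has_real_derivative (Iv s * (ds s - sigmoid (xs s + m)))) (at m)" for s
  proof -
    have p: "0 < 1 + exp (- (xs s + m))" by (rule opos)
    have "((\<lambda>m. - (1 - ds s) * (xs s + m) - ln (1 + exp (- (xs s + m))))
       has_real_derivative (ds s - sigmoid (xs s + m))) (at m)"
      using p by (auto intro!: derivative_eq_intros simp: sigmoid_def field_simps)
    then show ?thesis by (intro DERIV_cmult)
  qed
  have "((\<lambda>m. (\<Sum>s\<in>T. Iv s * (- (1 - ds s) * (xs s + m) - ln (1 + exp (- (xs s + m))))) - lam / 2 * m\<^sup>2)
     has_real_derivative ((\<Sum>s\<in>T. Iv s * (ds s - sigmoid (xs s + m))) - lam / 2 * (2 * m))) (at m)"
    by (intro DERIV_diff DERIV_sum d DERIV_cmult) (auto intro!: derivative_eq_intros)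
  then show ?thesis by simp
qed

lemma pen_max_exists:
  fixes T :: "nat set" and Iv xs ds :: "nat \<Rightarrow> real"
  assumes fin: "finite T" and vals: "\<forall>s\<in>T. Iv s \<in> {0,1} \<and> ds s \<in> {0,1}" and lam: "0 < lam"
  defines "pen \<equiv> \<lambda>m. (\<Sum>s\<in>T. Iv s * (ds s * ln (sigmoid (xs s + m)) + (1 - ds s) * ln (1 - sigmoid (xs s + m)))) - lam / 2 * m\<^sup>2"
  shows "\<exists>m. \<forall>m'. pen m' \<le> pen m"
proof -
  have cont: "isCont pen x" for x
  proof -
    have "pen = (\<lambda>m. (\<Sum>s\<in>T. Iv s * (- (1 - ds s) * (xs s + m) - ln (1 + exp (- (xs s + m))))) - lam / 2 * m\<^sup>2)"
      unfolding pen_def by (simp add: pen_closed)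
    then show ?thesis using DERIV_isCont[OF pen_deriv[where T=T and Iv=Iv and ds=ds and xs=xs and lam=lam and m=x]] by simp
  qed
  have up: "pen m \<le> - lam / 2 * m\<^sup>2" for m
  proof -
    have "(\<Sum>s\<in>T. Iv s * (ds s * ln (sigmoid (xs s + m)) + (1 - ds s) * ln (1 - sigmoid (xs s + m)))) \<le> 0"
    proof (intro sum_nonpos)
      fix s assume s: "s \<in> T"
      have l1: "ln (sigmoid (xs s + m)) \<le> 0" using sigmoid_pos sigmoid_lt1 by (simp add: less_imp_le)
      have l2: "ln (1 - sigmoid (xs s + m)) \<le> 0" using sigmoid_pos[of "xs s + m"] sigmoid_lt1[of "xs s + m"] by simp
      show "Iv s * (ds s * ln (sigmoid (xs s + m)) + (1 - ds s) * ln (1 - sigmoid (xs s + m))) \<le> 0"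
        using vals s l1 l2 by auto
    qed
    then show ?thesis unfolding pen_def by simp
  qed
  define c0 where "c0 = pen 0"
  define R where "R = sqrt (2 * \<bar>c0\<bar> / lam) + 1"
  have R0: "0 < R"
  proof -
    have "0 \<le> sqrt (2 * \<bar>c0\<bar> / lam)" using lam by simp
    then show ?thesis unfolding R_def by linarith
  qed
  obtain Mx where Mx: "\<forall>x. - R \<le> x \<and> x \<le> R \<longrightarrow> pen x \<le> Mx" and ex: "\<exists>x. - R \<le> x \<and> x \<le> R \<and> pen x = Mx"
    using isCont_eq_Ub[of "- R" R pen] R0 cont by auto
  obtain m0 where m0: "- R \<le> m0" "m0 \<le> R" "pen m0 = Mx" using ex by blast
  have "\<forall>m'. pen m' \<le> pen m0"
  proof
    fix m'
    show "pen m' \<le> pen m0"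
    proof (cases "\<bar>m'\<bar> \<le> R")
      case True then show ?thesis using Mx m0 by (auto simp: abs_le_iff)
    next
      case False
      have "2 * \<bar>c0\<bar> / lam \<le> R\<^sup>2"
      proof -
        have "2 * \<bar>c0\<bar> / lam = (sqrt (2 * \<bar>c0\<bar> / lam))\<^sup>2" using lam by simp
        also have "\<dots> \<le> R\<^sup>2" unfolding R_def using lam by (intro power_mono) auto
        finally show ?thesis .
      qed
      also have "R\<^sup>2 \<le> m'\<^sup>2" using False R0 abs_le_square_iff[of R m'] by auto
      finally have "2 * \<bar>c0\<bar> / lam \<le> m'\<^sup>2" .
      then have "\<bar>c0\<bar> \<le> lam / 2 * m'\<^sup>2" using lam by (simp add: field_simps)
      then have "pen m' \<le> c0" using up[of m'] by linarith
      also have "c0 \<le> pen m0" unfolding c0_def using Mx R0 m0 by auto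
      finally show ?thesis .
    qed
  qed
  then show ?thesis by blast
qed

lemma pen_foc:
  fixes T :: "nat set" and Iv xs ds :: "nat \<Rightarrow> real" and lam :: real
  defines "pen \<equiv> \<lambda>m. (\<Sum>s\<in>T. Iv s * (ds s * ln (sigmoid (xs s + m)) + (1 - ds s) * ln (1 - sigmoid (xs s + m)))) - lam / 2 * m\<^sup>2"
  assumes max: "\<forall>m'. pen m' \<le> pen m"
  shows "(\<Sum>s\<in>T. Iv s * (ds s - sigmoid (xs s + m))) = lam * m"
proof -
  have "pen = (\<lambda>m. (\<Sum>s\<in>T. Iv s * (- (1 - ds s) * (xs s + m) - ln (1 + exp (- (xs s + m))))) - lam / 2 * m\<^sup>2)"
    unfolding pen_def by (simp add: pen_closed)
  then have d: "DERIV pen m :> (\<Sum>s\<in>T. Iv s * (ds s - sigmoid (xs s + m))) - lam * m"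
    using pen_deriv[where T=T and Iv=Iv and ds=ds and xs=xs and lam=lam and m=m] by simp
  have "(\<Sum>s\<in>T. Iv s * (ds s - sigmoid (xs s + m))) - lam * m = 0"
    by (rule DERIV_local_max[OF d, of 1]) (use max in auto)
  then show ?thesis by simp
qed

lemma det_bound:
  fixes T :: "nat set" and Iv xs ds :: "nat \<Rightarrow> real" and lam mubar mus mle :: real
  assumes vals: "\<forall>s\<in>T. Iv s \<in> {0,1}" and lam: "0 < lam" and mub: "0 < mubar"
    and mus: "- mubar \<le> mus" "mus \<le> mubar"
    and foc: "(\<Sum>s\<in>T. Iv s * (ds s - sigmoid (xs s + mle))) = lam * mle"
  defines "muh \<equiv> max (- mubar) (min mubar mle)"
  shows "exp (- (2 * mubar)) * (lam + (\<Sum>s\<in>T. Iv s * sigmoid' (xs s + muh))) * \<bar>muh - mus\<bar>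
           \<le> \<bar>\<Sum>s\<in>T. Iv s * (ds s - sigmoid (xs s + mus))\<bar> + lam * mubar"
proof -
  define G where "G m = lam * m + (\<Sum>s\<in>T. Iv s * sigmoid (xs s + m))" for m
  define S where "S = (\<Sum>s\<in>T. Iv s * (ds s - sigmoid (xs s + mus)))"
  define K where "K = 2 * mubar"
  define Hh where "Hh = lam + (\<Sum>s\<in>T. Iv s * sigmoid' (xs s + muh))"
  have Iv0: "\<And>s. s \<in> T \<Longrightarrow> 0 \<le> Iv s" using vals by auto
  have Gmono: "G a \<le> G b" if "a \<le> b" for a b
    unfolding G_def using that lam Iv0
    by (intro add_mono mult_left_mono sum_mono sigmoid_mono) auto
  have Gdiff: "G mle - G mus = S - lam * mus"
  proof -
    have "(\<Sum>s\<in>T. Iv s * ds s) - (\<Sum>s\<in>T. Iv s * sigmoid (xs s + mle)) = lam * mle"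
      using foc by (simp add: right_diff_distrib sum_subtractf)
    moreover have "S = (\<Sum>s\<in>T. Iv s * ds s) - (\<Sum>s\<in>T. Iv s * sigmoid (xs s + mus))"
      unfolding S_def by (simp add: right_diff_distrib sum_subtractf)
    ultimately show ?thesis unfolding G_def by simp
  qed
  have Gbound: "\<bar>G mle - G mus\<bar> \<le> \<bar>S\<bar> + lam * mubar"
  proof -
    have "\<bar>mus\<bar> \<le> mubar" using mus by auto
    then have "\<bar>lam * mus\<bar> \<le> lam * mubar" using lam by (simp add: abs_mult)
    then show ?thesis unfolding Gdiff using abs_triangle_ineq4[of S "lam * mus"] by linarith
  qed
  have hmus: "\<bar>muh - mus\<bar> \<le> K" unfolding muh_def K_def using mus by auto
  have Kexp: "exp (- K) * Hh \<le> lam + (\<Sum>s\<in>T. Iv s * (exp (- K) * sigmoid' (xs s + muh)))"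
  proof -
    have "exp (- K) * lam \<le> lam" using lam mub by (simp add: K_def mult_le_cancel_right1)
    then show ?thesis unfolding Hh_def by (simp add: distrib_left sum_distrib_left ac_simps)
  qed
  show ?thesis
  proof (cases "mus \<le> mle")
    case True
    have h1: "mus \<le> muh" "muh \<le> mle" unfolding muh_def using True mus by auto
    have low: "exp (- K) * Hh * (muh - mus) \<le> G muh - G mus"
    proof -
      have "exp (- K) * Hh * (muh - mus) \<le> (lam + (\<Sum>s\<in>T. Iv s * (exp (- K) * sigmoid' (xs s + muh)))) * (muh - mus)"
        using Kexp h1 by (intro mult_right_mono) auto
      also have "\<dots> = lam * (muh - mus) + (\<Sum>s\<in>T. Iv s * (exp (- K) * sigmoid' (xs s + muh) * ((xs s + muh) - (xs s + mus))))"
        by (simp add: algebra_simps sum_distrib_left sum_distrib_right)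
      also have "\<dots> \<le> lam * (muh - mus) + (\<Sum>s\<in>T. Iv s * (sigmoid (xs s + muh) - sigmoid (xs s + mus)))"
        using Iv0 h1 hmus by (intro add_left_mono sum_mono mult_left_mono term_lower_ge) auto
      also have "\<dots> = G muh - G mus" unfolding G_def
        by (simp add: right_diff_distrib sum_subtractf algebra_simps)
      finally show ?thesis .
    qed
    have "G muh - G mus \<le> G mle - G mus" using Gmono[OF h1(2)] by simp
    then have "exp (- K) * Hh * \<bar>muh - mus\<bar> \<le> \<bar>G mle - G mus\<bar>" using low h1 by simp
    then show ?thesis using Gbound unfolding K_def Hh_def S_def by simp
  next
    case False
    have h1: "muh \<le> mus" "mle \<le> muh" unfolding muh_def using False mus by auto
    have low: "exp (- K) * Hh * (mus - muh) \<le> G mus - G muh"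
    proof -
      have "exp (- K) * Hh * (mus - muh) \<le> (lam + (\<Sum>s\<in>T. Iv s * (exp (- K) * sigmoid' (xs s + muh)))) * (mus - muh)"
        using Kexp h1 by (intro mult_right_mono) auto
      also have "\<dots> = lam * (mus - muh) + (\<Sum>s\<in>T. Iv s * (exp (- K) * sigmoid' (xs s + muh) * ((xs s + mus) - (xs s + muh))))"
        by (simp add: algebra_simps sum_distrib_left sum_distrib_right)
      also have "\<dots> \<le> lam * (mus - muh) + (\<Sum>s\<in>T. Iv s * (sigmoid (xs s + mus) - sigmoid (xs s + muh)))"
        using Iv0 h1 hmus by (intro add_left_mono sum_mono mult_left_mono term_lower_le) auto
      also have "\<dots> = G mus - G muh" unfolding G_def
        by (simp add: right_diff_distrib sum_subtractf algebra_simps)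
      finally show ?thesis .
    qed
    have "G mus - G muh \<le> G mus - G mle" using Gmono[OF h1(2)] by simp
    then have "exp (- K) * Hh * \<bar>muh - mus\<bar> \<le> \<bar>G mle - G mus\<bar>" using low h1 by simp
    then show ?thesis using Gbound unfolding K_def Hh_def S_def by simp
  qed
qed

lemma Hstar_le:
  fixes T :: "nat set" and Iv xs :: "nat \<Rightarrow> real" and lam K muh mus :: real
  assumes vals: "\<forall>s\<in>T. Iv s \<in> {0,1}" and lam: "0 < lam" and K: "\<bar>muh - mus\<bar> \<le> K"
  shows "lam + (\<Sum>s\<in>T. Iv s * sigmoid' (xs s + mus)) \<le> exp K * (lam + (\<Sum>s\<in>T. Iv s * sigmoid' (xs s + muh)))"
proof -
  have K0: "0 \<le> K" using K by linarith
  have t: "Iv s * sigmoid' (xs s + mus) \<le> exp K * (Iv s * sigmoid' (xs s + muh))" if s: "s \<in> T" for s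
  proof -
    have r: "exp (- \<bar>(xs s + muh) - (xs s + mus)\<bar>) * sigmoid' (xs s + mus) \<le> sigmoid' (xs s + muh)"
      by (rule sigmoid'_ratio)
    have "sigmoid' (xs s + mus) \<le> exp \<bar>muh - mus\<bar> * sigmoid' (xs s + muh)"
      using r by (simp add: exp_minus field_simps)
    also have "\<dots> \<le> exp K * sigmoid' (xs s + muh)"
      using K sigmoid'_pos[of "xs s + muh"] by (intro mult_right_mono) auto
    finally show ?thesis using vals s by auto
  qed
  have "lam \<le> exp K * lam" using K0 lam by simp
  then show ?thesis using t by (simp add: distrib_left sum_distrib_left) (intro add_mono sum_mono, auto simp: ac_simps)
qed

lemma theta_core:
  fixes S a h L :: real
  assumes a: "0 < a" and h: "0 < h"
    and pos: "(a / (2 * h)) * S - (a / (2 * h))\<^sup>2 * (h * h) < L"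
    and neg: "(- (a / (2 * h))) * S - (- (a / (2 * h)))\<^sup>2 * (h * h) < L"
  shows "\<bar>S\<bar> \<le> h * (a / 2 + 2 / a * L)"
proof -
  define th where "th = a / (2 * h)"
  have th0: "0 < th" unfolding th_def using a h by simp
  have e1: "th * (h * h) = h * (a / 2)" unfolding th_def using h by simp
  have e2: "L / th = h * (2 / a * L)" unfolding th_def using a h by simp
  have "th * S < th * (th * (h * h)) + L" using pos unfolding th_def[symmetric] by (simp add: power2_eq_square mult.assoc)
  then have "S < (th * (th * (h * h)) + L) / th" using th0 by (simp add: pos_less_divide_eq mult.commute)
  also have "\<dots> = th * (h * h) + L / th" using th0 by (simp add: add_divide_distrib)
  finally have p: "S < h * (a / 2 + 2 / a * L)" using e1 e2 by (simp add: distrib_left)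
  have "th * (- S) < th * (th * (h * h)) + L" using neg unfolding th_def[symmetric] by (simp add: power2_eq_square mult.assoc)
  then have "- S < (th * (th * (h * h)) + L) / th" using th0 by (simp add: pos_less_divide_eq mult.commute)
  also have "\<dots> = th * (h * h) + L / th" using th0 by (simp add: add_divide_distrib)
  finally have n: "- S < h * (a / 2 + 2 / a * L)" using e1 e2 by (simp add: distrib_left)
  show ?thesis using p n by (simp add: abs_le_iff)
qed

lemma theta_to_abs:
  fixes S H lam L :: real
  assumes lam: "0 < lam" and H: "lam \<le> H"
    and pos: "(sqrt lam / (2 * sqrt H)) * S - (sqrt lam / (2 * sqrt H))\<^sup>2 * H < L"
    and neg: "(- (sqrt lam / (2 * sqrt H))) * S - (- (sqrt lam / (2 * sqrt H)))\<^sup>2 * H < L"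
  shows "\<bar>S\<bar> \<le> sqrt H * (sqrt lam / 2 + 2 / sqrt lam * L)"
proof -
  have H0: "0 < H" using lam H by linarith
  have HH: "H = sqrt H * sqrt H" using H0 by simp
  show ?thesis
    by (rule theta_core) (use lam H0 pos neg HH in auto)
qed

lemma final_alg:
  fixes S Hh Hs lam mubar \<delta> D :: real and M :: nat
  assumes lam: "0 < lam" and mub: "0 < mubar" and M: "1 \<le> M" and dl: "0 < \<delta>" "\<delta> < 1"
    and Hh: "lam \<le> Hh" and Hs: "lam \<le> Hs" and HsHh: "Hs \<le> exp (2 * mubar) * Hh"
    and hS: "\<bar>S\<bar> \<le> sqrt Hs * (sqrt lam / 2 + 2 / sqrt lam * ln (2 * real M * sqrt Hs / (\<delta> * sqrt lam)))"
    and det: "exp (- (2 * mubar)) * Hh * D \<le> \<bar>S\<bar> + lam * mubar"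
  shows "D \<le> exp (3 * mubar) / sqrt Hh * (sqrt lam / 2 + 2 / sqrt lam * (mubar + ln (2 * real M * sqrt Hh / (\<delta> * sqrt lam))))
           + exp (2 * mubar) * lam * mubar / Hh"
proof -
  have Hh0: "0 < Hh" using lam Hh by linarith
  have Hs0: "0 < Hs" using lam Hs by linarith
  have sHs: "sqrt Hs \<le> exp mubar * sqrt Hh"
  proof -
    have "sqrt Hs \<le> sqrt (exp (2 * mubar) * Hh)" using HsHh by simp
    also have "\<dots> = exp mubar * sqrt Hh"
    proof -
      have "exp (2 * mubar) = exp mubar * exp mubar" by (simp add: exp_double power2_eq_square)
      then have "sqrt (exp (2 * mubar)) = sqrt (exp mubar * exp mubar)" by simp
      also have "\<dots> = exp mubar" by (simp add: real_sqrt_abs2)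
      finally show ?thesis by (simp add: real_sqrt_mult)
    qed
    finally show ?thesis .
  qed
  define L where "L = ln (2 * real M * sqrt Hs / (\<delta> * sqrt lam))"
  define Lh where "Lh = ln (2 * real M * sqrt Hh / (\<delta> * sqrt lam))"
  have argpos: "1 \<le> 2 * real M * sqrt Hs / (\<delta> * sqrt lam)"
  proof -
    have "sqrt lam \<le> sqrt Hs" using Hs by simp
    moreover have "\<delta> \<le> 2 * real M" using M dl by simp
    ultimately have "\<delta> * sqrt lam \<le> 2 * real M * sqrt Hs"
      using dl lam by (intro mult_mono) auto
    then show ?thesis using dl lam by simp
  qed
  have L0: "0 \<le> L" unfolding L_def using argpos by simp
  have LLh: "L \<le> mubar + Lh"
  proof -
    have pos: "0 < 2 * real M * sqrt Hs / (\<delta> * sqrt lam)" using argpos by linarith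
    have c0: "0 < \<delta> * sqrt lam" using dl lam by simp
    have "2 * real M * sqrt Hs \<le> 2 * real M * (exp mubar * sqrt Hh)"
      using sHs by (intro mult_left_mono) auto
    then have "2 * real M * sqrt Hs / (\<delta> * sqrt lam) \<le> 2 * real M * (exp mubar * sqrt Hh) / (\<delta> * sqrt lam)"
      using c0 by (intro divide_right_mono) auto
    also have "\<dots> = exp mubar * (2 * real M * sqrt Hh / (\<delta> * sqrt lam))" by (simp add: ac_simps)
    finally have "2 * real M * sqrt Hs / (\<delta> * sqrt lam) \<le> exp mubar * (2 * real M * sqrt Hh / (\<delta> * sqrt lam))" .
    then have "L \<le> ln (exp mubar * (2 * real M * sqrt Hh / (\<delta> * sqrt lam)))"
      unfolding L_def using pos by simp
    also have "\<dots> = mubar + Lh" unfolding Lh_def using dl lam M Hh0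
      by (subst ln_mult) auto
    finally show ?thesis .
  qed
  have B: "sqrt lam / 2 + 2 / sqrt lam * L \<le> sqrt lam / 2 + 2 / sqrt lam * (mubar + Lh)"
    using LLh lam by (intro add_left_mono mult_left_mono) auto
  have B0: "0 \<le> sqrt lam / 2 + 2 / sqrt lam * L" using L0 lam by simp
  have Sb: "\<bar>S\<bar> \<le> exp mubar * sqrt Hh * (sqrt lam / 2 + 2 / sqrt lam * (mubar + Lh))"
  proof -
    have "\<bar>S\<bar> \<le> sqrt Hs * (sqrt lam / 2 + 2 / sqrt lam * L)" using hS unfolding L_def .
    also have "\<dots> \<le> exp mubar * sqrt Hh * (sqrt lam / 2 + 2 / sqrt lam * (mubar + Lh))"
      using sHs B B0 Hh0 by (intro mult_mono) auto
    finally show ?thesis .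
  qed
  have D1: "D \<le> exp (2 * mubar) * (\<bar>S\<bar> + lam * mubar) / Hh"
  proof -
    have "exp (2 * mubar) * (exp (- (2 * mubar)) * Hh * D) \<le> exp (2 * mubar) * (\<bar>S\<bar> + lam * mubar)"
      using det by (intro mult_left_mono) auto
    moreover have "exp (2 * mubar) * (exp (- (2 * mubar)) * Hh * D) = Hh * D"
      by (simp add: exp_minus)
    ultimately have "Hh * D \<le> exp (2 * mubar) * (\<bar>S\<bar> + lam * mubar)" by simp
    then show ?thesis using Hh0 by (simp add: pos_le_divide_eq mult.commute)
  qed
  have split: "exp (2 * mubar) * (\<bar>S\<bar> + lam * mubar) / Hh = exp (2 * mubar) * \<bar>S\<bar> / Hh + exp (2 * mubar) * lam * mubar / Hh"
    by (simp add: distrib_left add_divide_distrib mult.assoc)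
  define Bh where "Bh = sqrt lam / 2 + 2 / sqrt lam * (mubar + Lh)"
  have t1: "exp (2 * mubar) * \<bar>S\<bar> / Hh \<le> exp (2 * mubar) * (exp mubar * sqrt Hh * Bh) / Hh"
    using Sb Hh0 unfolding Bh_def by (intro divide_right_mono mult_left_mono) auto
  have t2: "exp (2 * mubar) * (exp mubar * sqrt Hh * Bh) / Hh = exp (3 * mubar) / sqrt Hh * Bh"
  proof -
    have e3: "exp (2 * mubar) * exp mubar = exp (3 * mubar)" using exp_add[of "2 * mubar" mubar] by simp
    have h0: "0 < sqrt Hh" using Hh0 by simp
    have hh: "sqrt Hh * sqrt Hh = Hh" using Hh0 by simp
    have g: "E2 * (E1 * h * B) / (h * h) = E2 * E1 / h * B" if "0 < h" for E2 E1 h B :: real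
      using that by (simp add: field_simps)
    have "exp (2 * mubar) * (exp mubar * sqrt Hh * Bh) / (sqrt Hh * sqrt Hh) = exp (2 * mubar) * exp mubar / sqrt Hh * Bh"
      by (rule g[OF h0])
    then show ?thesis unfolding hh e3 .
  qed
  show ?thesis using D1 split t1 t2 unfolding Bh_def Lh_def by linarith
qed

lemma Jint_pos_fin: assumes "0 < lam" shows "0 < Jint 1 lam" "Jint 1 lam < top"
proof -
  have "Jint 1 lam \<le> (\<integral>\<^sup>+\<xi>. indicator {-1..1::real} \<xi> \<partial>lborel)"
    unfolding Jint_def using assms by (intro nn_integral_mono) (auto simp: indicator_def)
  also have "\<dots> = 2" by simp
  finally show "Jint 1 lam < top" by (simp add: less_le_trans[of _ 2] le_less_trans)
  have "(\<integral>\<^sup>+\<xi>. ennreal (exp (- lam)) * indicator {-1..1::real} \<xi> \<partial>lborel) \<le> Jint 1 lam"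
    unfolding Jint_def using assms
    by (intro nn_integral_mono) (auto simp: indicator_def abs_square_le_1 abs_le_iff intro!: mult_left_le_one_le)
  moreover have "(\<integral>\<^sup>+\<xi>. ennreal (exp (- lam)) * indicator {-1..1::real} \<xi> \<partial>lborel) = ennreal (exp (- lam)) * 2"
    by (simp add: nn_integral_cmult_indicator)
  moreover have "0 < ennreal (exp (- lam)) * 2" by (simp add: ennreal_zero_less_mult_iff)
  ultimately show "0 < Jint 1 lam" by (metis less_le_trans)
qed

lemma ineq_help:
  fixes a Dr b d :: real and Nv :: ennreal
  assumes "0 \<le> a" "0 < Dr" "0 < b" "0 < d" "Nv < ennreal (Dr / d)"
    and "ennreal a * ennreal Dr \<le> ennreal b * Nv"
  shows "a < b / d"
proof -
  have "ennreal b * Nv < ennreal b * ennreal (Dr / d)"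
    using assms by (intro ennreal_mult_strict_left_mono) auto
  then have "ennreal (a * Dr) < ennreal (b * (Dr / d))"
    using assms(6) assms by (simp add: ennreal_mult[symmetric])
  then have "a * Dr < b * (Dr / d)" using assms by (subst (asm) ennreal_less_iff) auto
  moreover have "b * (Dr / d) = (b / d) * Dr" by simp
  ultimately have "a * Dr < (b / d) * Dr" by simp
  then show ?thesis using mult_less_cancel_right_pos[of Dr a "b / d"] assms(2) by simp
qed

lemma conc_i:
  fixes P :: "'w measure" and F :: "nat \<Rightarrow> 'w measure" and I p dd :: "nat \<Rightarrow> 'w \<Rightarrow> real"
    and lam \<delta>' :: real
  assumes prob: "prob_space P"
    and F_sub: "\<forall>t\<ge>1. subalgebra P (F t)"
    and F_mono: "\<forall>t\<ge>1. sets (F t) \<subseteq> sets (F (Suc t))"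
    and I_meas: "\<forall>t\<ge>1. I t \<in> borel_measurable (F t)"
    and p_meas: "\<forall>t\<ge>1. p t \<in> borel_measurable (F t)"
    and dd_meas: "\<forall>t\<ge>1. dd t \<in> borel_measurable (F (Suc t))"
    and vals: "\<forall>t\<ge>1. \<forall>\<omega>\<in>space P. I t \<omega> \<in> {0,1} \<and> 0 \<le> p t \<omega> \<and> p t \<omega> \<le> 1 \<and> dd t \<omega> \<in> {0,1}"
    and adh: "\<forall>t\<ge>1. \<forall>A\<in>sets (F t). measure P (A \<inter> {\<omega>\<in>space P. dd t \<omega> = 1}) = (LINT \<omega>:A|P. I t \<omega> * p t \<omega>)"
    and lam: "0 < lam" and dl: "0 < \<delta>'"
  shows "\<exists>B\<in>sets P. measure P B \<le> \<delta>' \<and>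
    (\<forall>\<omega>\<in>space P - B. \<forall>t\<ge>1.
      \<bar>\<Sum>s\<in>{1..<t}. I s \<omega> * (dd s \<omega> - p s \<omega>)\<bar>
        \<le> sqrt (lam + (\<Sum>s\<in>{1..<t}. I s \<omega> * (p s \<omega> * (1 - p s \<omega>))))
           * (sqrt lam / 2 + 2 / sqrt lam * ln (2 * sqrt (lam + (\<Sum>s\<in>{1..<t}. I s \<omega> * (p s \<omega> * (1 - p s \<omega>)))) / (\<delta>' * sqrt lam))))"
proof -
  interpret prob_space P by (rule prob)
  have spF: "\<And>t. t \<ge> 1 \<Longrightarrow> space (F t) = space P" using F_sub by (auto simp: subalgebra_def)
  have setsF: "\<And>t. t \<ge> 1 \<Longrightarrow> sets (F t) \<subseteq> sets P" using F_sub by (auto simp: subalgebra_def)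
  have subFF: "subalgebra (F t) (F s)" if "1 \<le> s" "s \<le> t" for s t
    using filt_mono[OF F_mono that] spF that by (auto simp: subalgebra_def)
  define S where "S t \<omega> = (\<Sum>s\<in>{1..<t}. I s \<omega> * (dd s \<omega> - p s \<omega>))" for t \<omega>
  define V where "V t \<omega> = (\<Sum>s\<in>{1..<t}. I s \<omega> * (p s \<omega> * (1 - p s \<omega>)))" for t \<omega>
  have termsF: "I s \<in> borel_measurable (F t) \<and> p s \<in> borel_measurable (F t) \<and> dd s \<in> borel_measurable (F t)"
    if "1 \<le> s" "s < t" for s t
  proof -
    have a: "subalgebra (F t) (F s)" using subFF that by simp
    have b: "subalgebra (F t) (F (Suc s))" using subFF that by simp
    have "I s \<in> borel_measurable (F s)" "p s \<in> borel_measurable (F s)" "dd s \<in> borel_measurable (F (Suc s))"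
      using I_meas p_meas dd_meas that by auto
    then show ?thesis using measurable_from_subalg[OF a] measurable_from_subalg[OF b] by blast
  qed
  have SF: "S t \<in> borel_measurable (F t)" for t
    unfolding S_def
  proof (rule borel_measurable_sum)
    fix s assume "s \<in> {1..<t}"
    then have "I s \<in> borel_measurable (F t)" "p s \<in> borel_measurable (F t)" "dd s \<in> borel_measurable (F t)"
      using termsF by auto
    then show "(\<lambda>\<omega>. I s \<omega> * (dd s \<omega> - p s \<omega>)) \<in> borel_measurable (F t)" by measurable
  qed
  have VF: "V t \<in> borel_measurable (F t)" for t
    unfolding V_def
  proof (rule borel_measurable_sum)
    fix s assume "s \<in> {1..<t}"
    then have "I s \<in> borel_measurable (F t)" "p s \<in> borel_measurable (F t)"
      using termsF by auto
    then show "(\<lambda>\<omega>. I s \<omega> * (p s \<omega> * (1 - p s \<omega>))) \<in> borel_measurable (F t)" by measurable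
  qed
  define Z where "Z \<xi> t \<omega> = \<xi> * S t \<omega> - \<xi>\<^sup>2 * (lam + V t \<omega>)" for \<xi> :: real and t \<omega>
  define N where "N t \<omega> = (\<integral>\<^sup>+\<xi>. ennreal (indicator {-1..1} \<xi> * exp (Z \<xi> t \<omega>)) \<partial>lborel)" for t \<omega>
  have ZF: "(\<lambda>(\<omega>, \<xi>). ennreal (indicator {-1..1} \<xi> * exp (Z \<xi> t \<omega>))) \<in> borel_measurable (F t \<Otimes>\<^sub>M lborel)" for t
  proof -
    have [measurable]: "S t \<in> borel_measurable (F t)" "V t \<in> borel_measurable (F t)" using SF VF by auto
    show ?thesis unfolding Z_def by measurable
  qed
  have NF: "N t \<in> borel_measurable (F t)" for t
    unfolding N_def using lborel.borel_measurable_nn_integral[of "\<lambda>\<omega> \<xi>. ennreal (indicator {-1..1} \<xi> * exp (Z \<xi> t \<omega>))" "F t"] ZF[of t]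
    by simp
  have pf: "pair_sigma_finite lborel P"
    unfolding pair_sigma_finite_def using prob_space_imp_sigma_finite[OF prob] lborel.sigma_finite_measure_axioms by auto
  have SP: "S t \<in> borel_measurable P" "V t \<in> borel_measurable P" if "t \<ge> 1" for t
    using SF VF F_sub that by (auto intro: measurable_from_subalg)
  have Zsuc: "Z \<xi> (Suc t) \<omega> = Z \<xi> t \<omega> + \<xi> * (I t \<omega> * (dd t \<omega> - p t \<omega>)) - \<xi>\<^sup>2 * (I t \<omega> * (p t \<omega> * (1 - p t \<omega>)))"
    if "t \<ge> 1" for \<xi> t \<omega>
  proof -
    have e: "{1..<Suc t} = insert t {1..<t}" using that by auto
    show ?thesis unfolding Z_def S_def V_def e by (simp add: algebra_simps)
  qed
  have super: "\<forall>t\<ge>1. \<forall>A\<in>sets (F t). (\<integral>\<^sup>+\<omega>. N (Suc t) \<omega> * indicator A \<omega> \<partial>P) \<le> (\<integral>\<^sup>+\<omega>. N t \<omega> * indicator A \<omega> \<partial>P)"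
  proof (intro allI impI ballI)
    fix t A assume t: "t \<ge> 1" and A: "A \<in> sets (F t)"
    have AP: "A \<in> sets P" using A setsF t by auto
    have [measurable]: "S t \<in> borel_measurable P" "V t \<in> borel_measurable P"
      "S (Suc t) \<in> borel_measurable P" "V (Suc t) \<in> borel_measurable P" "A \<in> sets P"
      using SP t AP by auto
    have swap: "(\<integral>\<^sup>+\<omega>. N t' \<omega> * indicator A \<omega> \<partial>P) =
        (\<integral>\<^sup>+\<xi>. (\<integral>\<^sup>+\<omega>. ennreal (indicator {-1..1} \<xi> * exp (Z \<xi> t' \<omega>)) * indicator A \<omega> \<partial>P) \<partial>lborel)"
      if "t' \<in> {t, Suc t}" for t'
    proof -
      have [measurable]: "S t' \<in> borel_measurable P" "V t' \<in> borel_measurable P" using that SP t by auto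
      have "(\<integral>\<^sup>+\<omega>. N t' \<omega> * indicator A \<omega> \<partial>P) =
          (\<integral>\<^sup>+\<omega>. (\<integral>\<^sup>+\<xi>. ennreal (indicator {-1..1} \<xi> * exp (Z \<xi> t' \<omega>)) * indicator A \<omega> \<partial>lborel) \<partial>P)"
        unfolding N_def by (intro nn_integral_cong nn_integral_multc[symmetric]) (auto simp: Z_def)
      also have "\<dots> = (\<integral>\<^sup>+\<xi>. (\<integral>\<^sup>+\<omega>. ennreal (indicator {-1..1} \<xi> * exp (Z \<xi> t' \<omega>)) * indicator A \<omega> \<partial>P) \<partial>lborel)"
        by (rule pair_sigma_finite.Fubini'[OF pf]) (unfold Z_def, measurable)
      finally show ?thesis .
    qed
    have mono: "(\<integral>\<^sup>+\<omega>. ennreal (indicator {-1..1} \<xi> * exp (Z \<xi> (Suc t) \<omega>)) * indicator A \<omega> \<partial>P)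
        \<le> (\<integral>\<^sup>+\<omega>. ennreal (indicator {-1..1} \<xi> * exp (Z \<xi> t \<omega>)) * indicator A \<omega> \<partial>P)" for \<xi>
    proof (cases "\<xi> \<in> {-1..1}")
      case False then show ?thesis by simp
    next
      case True
      then have xi: "\<bar>\<xi>\<bar> \<le> 1" by auto
      have ZtF: "Z \<xi> t \<in> borel_measurable (F t)"
      proof -
        have [measurable]: "S t \<in> borel_measurable (F t)" "V t \<in> borel_measurable (F t)" using SF VF by auto
        show ?thesis unfolding Z_def by measurable
      qed
      have ddP: "dd t \<in> borel_measurable P"
      proof -
        have "subalgebra P (F (Suc t))" using F_sub by simp
        moreover have "dd t \<in> borel_measurable (F (Suc t))" using dd_meas t by simp
        ultimately show ?thesis by (rule measurable_from_subalg)
      qed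
      have os: "(\<integral>\<^sup>+\<omega>. ennreal (exp (Z \<xi> t \<omega> + \<xi> * (I t \<omega> * (dd t \<omega> - p t \<omega>)) - \<xi>\<^sup>2 * (I t \<omega> * (p t \<omega> * (1 - p t \<omega>))))) * indicator A \<omega> \<partial>P)
          \<le> (\<integral>\<^sup>+\<omega>. ennreal (exp (Z \<xi> t \<omega>)) * indicator A \<omega> \<partial>P)"
        using one_step[OF prob _ ZtF _ _ ddP _ _ xi A, of "I t" "p t"] F_sub I_meas p_meas vals adh t by auto
      show ?thesis using True os by (simp add: Zsuc[OF t])
    qed
    show "(\<integral>\<^sup>+\<omega>. N (Suc t) \<omega> * indicator A \<omega> \<partial>P) \<le> (\<integral>\<^sup>+\<omega>. N t \<omega> * indicator A \<omega> \<partial>P)"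
    proof -
      have e1: "(\<integral>\<^sup>+\<omega>. N (Suc t) \<omega> * indicator A \<omega> \<partial>P) =
        (\<integral>\<^sup>+\<xi>. (\<integral>\<^sup>+\<omega>. ennreal (indicator {-1..1} \<xi> * exp (Z \<xi> (Suc t) \<omega>)) * indicator A \<omega> \<partial>P) \<partial>lborel)"
        by (rule swap) simp
      have e2: "(\<integral>\<^sup>+\<omega>. N t \<omega> * indicator A \<omega> \<partial>P) =
        (\<integral>\<^sup>+\<xi>. (\<integral>\<^sup>+\<omega>. ennreal (indicator {-1..1} \<xi> * exp (Z \<xi> t \<omega>)) * indicator A \<omega> \<partial>P) \<partial>lborel)"
        by (rule swap) simp
      show ?thesis unfolding e1 e2 by (intro nn_integral_mono mono)
    qed
  qed
  have N1: "(\<integral>\<^sup>+\<omega>. N 1 \<omega> \<partial>P) \<le> Jint 1 lam"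
  proof -
    have "N 1 \<omega> = Jint 1 lam" for \<omega>
      unfolding N_def Jint_def Z_def S_def V_def by (simp add: mult.commute)
    then show ?thesis by (simp add: emeasure_space_1)
  qed
  define Dr where "Dr = enn2real (Jint 1 lam)"
  have Dr: "Jint 1 lam = ennreal Dr" "0 < Dr" unfolding Dr_def using Jint_pos_fin[OF lam]
    by (auto simp: enn2real_positive_iff less_top[symmetric])
  define c where "c = Dr / \<delta>'"
  have c0: "0 < c" unfolding c_def using Dr dl by simp
  define B where "B = {\<omega>\<in>space P. \<exists>t\<ge>1. ennreal c \<le> N t \<omega>}"
  have vil: "ennreal c * emeasure P B \<le> Jint 1 lam"
    unfolding B_def by (rule ville[OF prob F_sub F_mono _ N1 super c0]) (use NF in auto)
  have BP: "B \<in> sets P"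
  proof -
    have NP: "N t \<in> borel_measurable P" if "t \<ge> 1" for t using NF F_sub that by (auto intro: measurable_from_subalg)
    have m: "{\<omega> \<in> space P. ennreal c \<le> N t \<omega>} \<in> sets P" if "t \<ge> 1" for t
    proof -
      have [measurable]: "N t \<in> borel_measurable P" using NP[of t] that by simp
      show ?thesis by measurable
    qed
    have "B = (\<Union>t\<in>{1..}. {\<omega>\<in>space P. ennreal c \<le> N t \<omega>})" unfolding B_def by auto
    also have "\<dots> \<in> sets P" using m by (intro sets.countable_UN') auto
    finally show ?thesis .
  qed
  have mB: "measure P B \<le> \<delta>'"
  proof -
    have "ennreal c * emeasure P B \<le> ennreal Dr" using vil Dr by simp
    then have "ennreal (c * measure P B) \<le> ennreal Dr" using c0 by (simp add: emeasure_eq_measure ennreal_mult)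
    then have "c * measure P B \<le> Dr" using Dr by (subst (asm) ennreal_le_iff) auto
    then show ?thesis unfolding c_def using Dr dl by (simp add: field_simps)
  qed
  have good: "\<bar>S t \<omega>\<bar> \<le> sqrt (lam + V t \<omega>) * (sqrt lam / 2 + 2 / sqrt lam * ln (2 * sqrt (lam + V t \<omega>) / (\<delta>' * sqrt lam)))"
    if w: "\<omega> \<in> space P - B" and t: "t \<ge> 1" for \<omega> t
  proof -
    define H where "H = lam + V t \<omega>"
    have V0: "0 \<le> V t \<omega>" unfolding V_def
    proof (intro sum_nonneg)
      fix s assume "s \<in> {1..<t}"
      then have "I s \<omega> \<in> {0,1} \<and> 0 \<le> p s \<omega> \<and> p s \<omega> \<le> 1" using vals w by auto
      then show "0 \<le> I s \<omega> * (p s \<omega> * (1 - p s \<omega>))" by auto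
    qed
    have H: "lam \<le> H" unfolding H_def using V0 by simp
    have Nlt: "N t \<omega> < ennreal (Dr / \<delta>')"
    proof -
      have "\<not> (ennreal c \<le> N t \<omega>)" using w t unfolding B_def by auto
      then show ?thesis unfolding c_def by (simp add: not_le)
    qed
    define th where "th = sqrt lam / (2 * sqrt H)"
    have th2: "\<bar>th\<bar> \<le> 1/2" "\<bar>- th\<bar> \<le> 1/2"
    proof -
      have "sqrt lam \<le> sqrt H" using H by simp
      then have "sqrt lam / (2 * sqrt H) \<le> 1/2" using lam H by (simp add: field_simps)
      moreover have "0 \<le> sqrt lam / (2 * sqrt H)" using lam H by simp
      ultimately show "\<bar>th\<bar> \<le> 1/2" "\<bar>- th\<bar> \<le> 1/2" unfolding th_def by auto
    qed
    have b0: "0 < 2 * sqrt (H / lam)" using lam H by simp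
    have Leq: "2 * sqrt (H / lam) / \<delta>' = 2 * sqrt H / (\<delta>' * sqrt lam)"
      by (simp add: real_sqrt_divide)
    have key: "\<theta> * S t \<omega> - \<theta>\<^sup>2 * H < ln (2 * sqrt H / (\<delta>' * sqrt lam))" if th: "\<bar>\<theta>\<bar> \<le> 1/2" for \<theta>
    proof -
      have ml: "ennreal (exp (\<theta> * S t \<omega> - \<theta>\<^sup>2 * H)) * ennreal Dr \<le> ennreal (2 * sqrt (H / lam)) * N t \<omega>"
        using mix_lower[OF th lam H, of "S t \<omega>"] Dr unfolding N_def Z_def H_def by simp
      have "exp (\<theta> * S t \<omega> - \<theta>\<^sup>2 * H) < 2 * sqrt (H / lam) / \<delta>'"
        by (rule ineq_help[OF _ Dr(2) b0 dl Nlt ml]) simp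
      then have "ln (exp (\<theta> * S t \<omega> - \<theta>\<^sup>2 * H)) < ln (2 * sqrt (H / lam) / \<delta>')"
        using b0 dl by (intro ln_less_cancel_iff[THEN iffD2]) auto
      then show ?thesis using Leq by simp
    qed
    have "\<bar>S t \<omega>\<bar> \<le> sqrt H * (sqrt lam / 2 + 2 / sqrt lam * ln (2 * sqrt H / (\<delta>' * sqrt lam)))"
      by (rule theta_to_abs[OF lam H]) (use key[OF th2(1)] key[OF th2(2)] in \<open>simp_all add: th_def\<close>)
    then show ?thesis unfolding H_def .
  qed
  show ?thesis using BP mB good unfolding S_def V_def by blast
qed

theorem proposition5:
  fixes P :: "'w measure"
    and M :: nat
    and a abar bbar cbar mubar wbar sigma_s lam2 \<delta> :: real
    and b c mu_star :: "nat \<Rightarrow> real"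
    and x w :: "nat \<Rightarrow> 'w \<Rightarrow> real"
    and u d :: "nat \<Rightarrow> 'w \<Rightarrow> nat \<Rightarrow> real"
    and F G :: "nat \<Rightarrow> 'w measure"
    and f :: "real \<Rightarrow> real"
  assumes prob: "prob_space P"
    and M_pos: "M \<ge> 1"
    (* parameters *)
    and abar: "0 < abar" "abar < 1" and a: "0 \<le> a" "a \<le> abar"
    and b: "\<forall>i\<in>{1..M}. \<bar>b i\<bar> \<le> bbar"
    and c: "\<forall>i\<in>{1..M}. \<bar>c i\<bar> \<le> cbar"
    and mubar: "mubar > 0"
    and mu_star: "\<forall>i\<in>{1..M}. - mubar \<le> mu_star i \<and> mu_star i \<le> mubar"
    (* information structure: F t = history up to x_t, u_t (incl. independent randomisation);
       G t = F t together with d_t *)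
    and F_sub: "\<forall>t\<ge>1. subalgebra P (F t)"
    and G_sub: "\<forall>t\<ge>1. subalgebra P (G t)"
    and F_G: "\<forall>t\<ge>1. sets (F t) \<subseteq> sets (G t)"
    and G_F: "\<forall>t\<ge>1. sets (G t) \<subseteq> sets (F (Suc t))"
    and x_meas: "\<forall>t\<ge>1. x t \<in> borel_measurable (F t)"
    and u_meas: "\<forall>t\<ge>1. \<forall>i. (\<lambda>\<omega>. u t \<omega> i) \<in> borel_measurable (F t)"
    and d_meas: "\<forall>t\<ge>1. \<forall>i. (\<lambda>\<omega>. d t \<omega> i) \<in> borel_measurable (G t)"
    and w_meas: "\<forall>t\<ge>1. w t \<in> borel_measurable P"
    (* actions and adherence *)
    and u_set: "\<forall>t\<ge>1. \<forall>\<omega>\<in>space P. u t \<omega> \<in> action_set M"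
    and d_vals: "\<forall>t\<ge>1. \<forall>\<omega>\<in>space P. \<forall>i. d t \<omega> i \<in> {0, 1}"
    and adherence: "\<forall>t\<ge>1. \<forall>i\<in>{1..M}. \<forall>A\<in>sets (F t).
        measure P (A \<inter> {\<omega>\<in>space P. d t \<omega> i = 1})
          = (LINT \<omega>:A|P. u t \<omega> i * sigmoid (x t \<omega> + mu_star i))"
    (* dynamics *)
    and dyn: "\<forall>t\<ge>1. \<forall>\<omega>\<in>space P. x (Suc t) \<omega> =
        a * x t \<omega> + (\<Sum>i\<in>{1..M}. b i * u t \<omega> i) + (\<Sum>i\<in>{1..M}. c i * d t \<omega> i) + w t \<omega>"
    (* noise *)
    and w_indep: "\<forall>t\<ge>1. \<forall>A\<in>sets (G t). \<forall>B\<in>sets borel.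
        measure P (A \<inter> (w t -` B \<inter> space P)) = measure P A * measure P (w t -` B \<inter> space P)"
    and w_iid: "prob_space.indep_vars P (\<lambda>_. borel) w {1..}"
    and w_ident: "\<forall>t\<ge>1. distr P borel (w t) = distr P borel (w 1)"
    and x1_dist: "distr P borel (x 1) = distr P borel (w 1)"
    and w_density: "distributed P lborel (w 1) (\<lambda>z. ennreal (f z))"
    and f_nonneg: "\<forall>z. 0 \<le> f z"
    and f_sym: "\<forall>z. f (- z) = f z"
    and f_logconc: "log_concave f"
    and wbar: "wbar > 0" and w_bdd: "\<forall>t\<ge>1. \<forall>\<omega>\<in>space P. \<bar>w t \<omega>\<bar> \<le> wbar"
    and w_subg: "\<forall>l. (\<integral>\<omega>. exp (l * w 1 \<omega>) \<partial>P) \<le> exp (l\<^sup>2 * sigma_s\<^sup>2 / 2)"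
    (* confidence parameters *)
    and lam2: "lam2 > 0"
    and delta: "0 < \<delta>" "\<delta> < 1"
  shows "\<exists>E\<in>sets P. measure P E \<ge> 1 - \<delta> \<and>
    (\<forall>\<omega>\<in>E. \<forall>t\<ge>1. \<forall>i\<in>{1..M}.
       \<bar>mu_hat mubar lam2 (\<lambda>s. x s \<omega>) (\<lambda>s. u s \<omega>) (\<lambda>s. d s \<omega>) i t - mu_star i\<bar>
         \<le> alpha_mu M mubar lam2 \<delta> (\<lambda>s. x s \<omega>) (\<lambda>s. u s \<omega>) (\<lambda>s. d s \<omega>) i t)"
proof -
  interpret prob_space P by (rule prob)
  have act: "(v = basis_vec i) = (v i = 1)" "v i \<in> {0,1}" if v: "v \<in> action_set M" and i: "i \<in> {1..M}" for v i
  proof -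
    have vv: "\<forall>j. v j \<in> {0, 1}" "\<forall>j. j \<notin> {1..M} \<longrightarrow> v j = 0" "card {j. v j \<noteq> 0} \<le> 1"
      using v by (auto simp: action_set_def)
    show "v i \<in> {0,1}" using vv(1) by blast
    show "(v = basis_vec i) = (v i = 1)"
    proof
      assume "v = basis_vec i" then show "v i = 1" by (simp add: basis_vec_def)
    next
      assume vi: "v i = 1"
      have "{j. v j \<noteq> 0} \<subseteq> {1..M}" using vv(2) by blast
      then have fin: "finite {j. v j \<noteq> 0}" by (rule finite_subset) simp
      have only: "v j = 0" if ji: "j \<noteq> i" for j
      proof (rule ccontr)
        assume "v j \<noteq> 0"
        then have "{i, j} \<subseteq> {j. v j \<noteq> 0}" using vi by auto
        then have "card {i, j} \<le> card {j. v j \<noteq> 0}" using fin by (rule card_mono[rotated])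
        moreover have "card {i, j} = 2" using ji by simp
        ultimately show False using vv(3) by simp
      qed
      show "v = basis_vec i"
      proof
        fix j show "v j = basis_vec i j"
          using only vi by (cases "j = i") (auto simp: basis_vec_def)
      qed
    qed
  qed
  have F_mono: "\<forall>t\<ge>1. sets (F t) \<subseteq> sets (F (Suc t))" using F_G G_F by blast
  have sigm_meas: "(\<lambda>\<omega>. sigmoid (x t \<omega> + mu_star i)) \<in> borel_measurable (F t)" if "t \<ge> 1" for t i
  proof -
    have [measurable]: "x t \<in> borel_measurable (F t)" using x_meas that by simp
    show ?thesis unfolding sigmoid_def by measurable
  qed
  define goodB where "goodB i B \<longleftrightarrow> B \<in> sets P \<and> measure P B \<le> \<delta> / M \<and>
    (\<forall>\<omega>\<in>space P - B. \<forall>t\<ge>1. \<bar>\<Sum>s\<in>{1..<t}. u s \<omega> i * (d s \<omega> i - sigmoid (x s \<omega> + mu_star i))\<bar>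
        \<le> sqrt (lam2 + (\<Sum>s\<in>{1..<t}. u s \<omega> i * (sigmoid (x s \<omega> + mu_star i) * (1 - sigmoid (x s \<omega> + mu_star i)))))
           * (sqrt lam2 / 2 + 2 / sqrt lam2 * ln (2 * sqrt (lam2 + (\<Sum>s\<in>{1..<t}. u s \<omega> i * (sigmoid (x s \<omega> + mu_star i) * (1 - sigmoid (x s \<omega> + mu_star i))))) / (\<delta> / M * sqrt lam2))))" for i B
  have conc: "\<exists>B. goodB i B" if i: "i \<in> {1..M}" for i
  proof -
    have "\<exists>B\<in>sets P. measure P B \<le> \<delta> / M \<and>
    (\<forall>\<omega>\<in>space P - B. \<forall>t\<ge>1. \<bar>\<Sum>s\<in>{1..<t}. u s \<omega> i * (d s \<omega> i - sigmoid (x s \<omega> + mu_star i))\<bar>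
        \<le> sqrt (lam2 + (\<Sum>s\<in>{1..<t}. u s \<omega> i * (sigmoid (x s \<omega> + mu_star i) * (1 - sigmoid (x s \<omega> + mu_star i)))))
           * (sqrt lam2 / 2 + 2 / sqrt lam2 * ln (2 * sqrt (lam2 + (\<Sum>s\<in>{1..<t}. u s \<omega> i * (sigmoid (x s \<omega> + mu_star i) * (1 - sigmoid (x s \<omega> + mu_star i))))) / (\<delta> / M * sqrt lam2))))"
  proof (rule conc_i[OF prob F_sub F_mono])
      show "\<forall>t\<ge>1. (\<lambda>\<omega>. u t \<omega> i) \<in> borel_measurable (F t)" using u_meas by auto
      show "\<forall>t\<ge>1. (\<lambda>\<omega>. sigmoid (x t \<omega> + mu_star i)) \<in> borel_measurable (F t)" using sigm_meas by auto
      show "\<forall>t\<ge>1. (\<lambda>\<omega>. d t \<omega> i) \<in> borel_measurable (F (Suc t))"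
      proof (intro allI impI)
        fix t :: nat assume t: "t \<ge> 1"
        have "subalgebra (F (Suc t)) (G t)"
          using F_sub G_sub G_F t by (auto simp: subalgebra_def)
        moreover have "(\<lambda>\<omega>. d t \<omega> i) \<in> borel_measurable (G t)" using d_meas t by auto
        ultimately show "(\<lambda>\<omega>. d t \<omega> i) \<in> borel_measurable (F (Suc t))" by (rule measurable_from_subalg)
      qed
      show "\<forall>t\<ge>1. \<forall>\<omega>\<in>space P. u t \<omega> i \<in> {0, 1} \<and> 0 \<le> sigmoid (x t \<omega> + mu_star i) \<and> sigmoid (x t \<omega> + mu_star i) \<le> 1 \<and> d t \<omega> i \<in> {0, 1}"
        using act(2) u_set d_vals i sigmoid_pos sigmoid_lt1 by (auto simp: less_imp_le)
      show "\<forall>t\<ge>1. \<forall>A\<in>sets (F t). measure P (A \<inter> {\<omega> \<in> space P. d t \<omega> i = 1}) = (LINT \<omega>:A|P. u t \<omega> i * sigmoid (x t \<omega> + mu_star i))"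
        using adherence i by auto
      show "0 < lam2" by (rule lam2)
      show "0 < \<delta> / real M" using delta M_pos by simp
    qed
  
    then show ?thesis unfolding goodB_def by blast
  qed
  then have "\<forall>i\<in>{1..M}. \<exists>B. goodB i B" by blast
  then obtain Bf where Bfg: "\<forall>i\<in>{1..M}. goodB i (Bf i)" using bchoice by blast
  have Bf: "Bf i \<in> sets P" "measure P (Bf i) \<le> \<delta> / M"
     "\<forall>\<omega>\<in>space P - Bf i. \<forall>t\<ge>1. \<bar>\<Sum>s\<in>{1..<t}. u s \<omega> i * (d s \<omega> i - sigmoid (x s \<omega> + mu_star i))\<bar>
        \<le> sqrt (lam2 + (\<Sum>s\<in>{1..<t}. u s \<omega> i * (sigmoid (x s \<omega> + mu_star i) * (1 - sigmoid (x s \<omega> + mu_star i)))))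
           * (sqrt lam2 / 2 + 2 / sqrt lam2 * ln (2 * sqrt (lam2 + (\<Sum>s\<in>{1..<t}. u s \<omega> i * (sigmoid (x s \<omega> + mu_star i) * (1 - sigmoid (x s \<omega> + mu_star i))))) / (\<delta> / M * sqrt lam2)))"
    if "i \<in> {1..M}" for i
    using Bfg that unfolding goodB_def by auto
  define E where "E = space P - (\<Union>i\<in>{1..M}. Bf i)"
  have UP: "(\<Union>i\<in>{1..M}. Bf i) \<in> sets P" using Bf by auto
  have EP: "E \<in> sets P" unfolding E_def using UP by auto
  have mE: "measure P E \<ge> 1 - \<delta>"
  proof -
    have "measure P (\<Union>i\<in>{1..M}. Bf i) \<le> (\<Sum>i\<in>{1..M}. measure P (Bf i))"
      using Bf by (intro measure_UNION_le) auto
    also have "\<dots> \<le> (\<Sum>i\<in>{1..M}. \<delta> / M)" using Bf by (intro sum_mono) auto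
    also have "\<dots> = \<delta>" using M_pos by simp
    finally show ?thesis unfolding E_def using prob_compl[OF UP] by simp
  qed
  have main: "\<bar>mu_hat mubar lam2 (\<lambda>s. x s \<omega>) (\<lambda>s. u s \<omega>) (\<lambda>s. d s \<omega>) i t - mu_star i\<bar>
         \<le> alpha_mu M mubar lam2 \<delta> (\<lambda>s. x s \<omega>) (\<lambda>s. u s \<omega>) (\<lambda>s. d s \<omega>) i t"
    if w: "\<omega> \<in> E" and t: "t \<ge> 1" and i: "i \<in> {1..M}" for \<omega> t i
  proof -
    have wP: "\<omega> \<in> space P" and wB: "\<omega> \<notin> Bf i" using w i unfolding E_def by auto
    define T where "T = {1..<t}"
    define Iv where "Iv s = u s \<omega> i" for s
    define xs where "xs s = x s \<omega>" for s
    define ds where "ds s = d s \<omega> i" for s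
    have sT: "s \<ge> 1" if "s \<in> T" for s using that unfolding T_def by auto
    have uact: "u s \<omega> \<in> action_set M" if "s \<in> T" for s using u_set wP sT[OF that] by auto
    have valsT: "\<forall>s\<in>T. Iv s \<in> {0,1} \<and> ds s \<in> {0,1}"
    proof
      fix s assume s: "s \<in> T"
      have "Iv s \<in> {0,1}" unfolding Iv_def using act(2)[OF uact[OF s] i] .
      moreover have "ds s \<in> {0,1}" unfolding ds_def using d_vals wP sT[OF s] by auto
      ultimately show "Iv s \<in> {0,1} \<and> ds s \<in> {0,1}" by blast
    qed
    have Iv01: "\<forall>s\<in>T. Iv s \<in> {0,1}" using valsT by blast
    have ind_eq: "(if u s \<omega> = basis_vec i then 1 else 0) = Iv s" if s: "s \<in> T" for s
    proof -
      have "(u s \<omega> = basis_vec i) = (u s \<omega> i = 1)" using act(1)[OF uact[OF s] i] .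
      moreover have "u s \<omega> i \<in> {0,1}" using act(2)[OF uact[OF s] i] .
      ultimately show ?thesis unfolding Iv_def by auto
    qed
    define penT where "penT m = (\<Sum>s\<in>T. Iv s * (ds s * ln (sigmoid (xs s + m)) + (1 - ds s) * ln (1 - sigmoid (xs s + m)))) - lam2 / 2 * m\<^sup>2" for m
    have pen_eq: "pen_loglik lam2 (\<lambda>s. x s \<omega>) (\<lambda>s. u s \<omega>) (\<lambda>s. d s \<omega>) i t = penT"
    proof
      fix m
      show "pen_loglik lam2 (\<lambda>s. x s \<omega>) (\<lambda>s. u s \<omega>) (\<lambda>s. d s \<omega>) i t m = penT m"
        unfolding pen_loglik_def penT_def T_def[symmetric]
        using ind_eq by (simp add: xs_def ds_def)
    qed
    define mle where "mle = mu_mle lam2 (\<lambda>s. x s \<omega>) (\<lambda>s. u s \<omega>) (\<lambda>s. d s \<omega>) i t"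
    have mle_eq: "mle = (SOME m. \<forall>m'. penT m' \<le> penT m)"
      unfolding mle_def mu_mle_def pen_eq ..
    have ex: "\<exists>m. \<forall>m'. penT m' \<le> penT m"
      unfolding penT_def by (rule pen_max_exists) (use valsT lam2 in \<open>auto simp: T_def\<close>)
    have mlemax: "\<forall>m'. penT m' \<le> penT mle"
      unfolding mle_eq by (rule someI_ex[OF ex])
    have foc: "(\<Sum>s\<in>T. Iv s * (ds s - sigmoid (xs s + mle))) = lam2 * mle"
      using mlemax unfolding penT_def by (rule pen_foc)
    define muh where "muh = max (- mubar) (min mubar mle)"
    have muh_eq: "mu_hat mubar lam2 (\<lambda>s. x s \<omega>) (\<lambda>s. u s \<omega>) (\<lambda>s. d s \<omega>) i t = muh"
      unfolding mu_hat_def muh_def mle_def ..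
    have mus: "- mubar \<le> mu_star i" "mu_star i \<le> mubar" using mu_star i by auto
    define S where "S = (\<Sum>s\<in>T. Iv s * (ds s - sigmoid (xs s + mu_star i)))"
    define Hh where "Hh = lam2 + (\<Sum>s\<in>T. Iv s * sigmoid' (xs s + muh))"
    define Hs where "Hs = lam2 + (\<Sum>s\<in>T. Iv s * sigmoid' (xs s + mu_star i))"
    have det: "exp (- (2 * mubar)) * Hh * \<bar>muh - mu_star i\<bar> \<le> \<bar>S\<bar> + lam2 * mubar"
      unfolding Hh_def S_def muh_def by (rule det_bound[OF Iv01 lam2 mubar mus foc])
    have hmus: "\<bar>muh - mu_star i\<bar> \<le> 2 * mubar" unfolding muh_def using mus by auto
    have HsHh: "Hs \<le> exp (2 * mubar) * Hh"
      unfolding Hs_def Hh_def by (rule Hstar_le[OF Iv01 lam2 hmus])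
    have nonneg: "0 \<le> (\<Sum>s\<in>T. Iv s * sigmoid' (xs s + m))" for m
      using Iv01 sigmoid'_pos by (intro sum_nonneg) (auto simp: less_imp_le)
    have Hh_ge: "lam2 \<le> Hh" unfolding Hh_def using nonneg by simp
    have Hs_ge: "lam2 \<le> Hs" unfolding Hs_def using nonneg by simp
    have conc_w: "\<bar>S\<bar> \<le> sqrt Hs * (sqrt lam2 / 2 + 2 / sqrt lam2 * ln (2 * sqrt Hs / (\<delta> / M * sqrt lam2)))"
    proof -
      have "\<bar>\<Sum>s\<in>{1..<t}. u s \<omega> i * (d s \<omega> i - sigmoid (x s \<omega> + mu_star i))\<bar>
        \<le> sqrt (lam2 + (\<Sum>s\<in>{1..<t}. u s \<omega> i * (sigmoid (x s \<omega> + mu_star i) * (1 - sigmoid (x s \<omega> + mu_star i)))))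
           * (sqrt lam2 / 2 + 2 / sqrt lam2 * ln (2 * sqrt (lam2 + (\<Sum>s\<in>{1..<t}. u s \<omega> i * (sigmoid (x s \<omega> + mu_star i) * (1 - sigmoid (x s \<omega> + mu_star i))))) / (\<delta> / M * sqrt lam2)))"
        using Bf(3)[OF i] wP wB t by blast
      then show ?thesis unfolding S_def Hs_def T_def Iv_def xs_def ds_def sigmoid'_def .
    qed
    have lneq: "2 * sqrt Hs / (\<delta> / M * sqrt lam2) = 2 * real M * sqrt Hs / (\<delta> * sqrt lam2)"
      using M_pos by simp
    have hS: "\<bar>S\<bar> \<le> sqrt Hs * (sqrt lam2 / 2 + 2 / sqrt lam2 * ln (2 * real M * sqrt Hs / (\<delta> * sqrt lam2)))"
      using conc_w unfolding lneq .
    have fin: "\<bar>muh - mu_star i\<bar> \<le> exp (3 * mubar) / sqrt Hh * (sqrt lam2 / 2 + 2 / sqrt lam2 * (mubar + ln (2 * real M * sqrt Hh / (\<delta> * sqrt lam2))))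
           + exp (2 * mubar) * lam2 * mubar / Hh"
      by (rule final_alg[OF lam2 mubar M_pos delta Hh_ge Hs_ge HsHh hS det])
    have Hinfo: "H_info lam2 (\<lambda>s. x s \<omega>) (\<lambda>s. u s \<omega>) i t muh = Hh"
      unfolding H_info_def Hh_def T_def[symmetric] using ind_eq by (simp add: xs_def)
    show ?thesis
      unfolding alpha_mu_def Let_def muh_eq Hinfo using fin .
  qed
  show ?thesis using EP mE main by blast
qed

end
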